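(* Let $R$ be a unital ring such that $K_0(R)$ is a finitely generated abelian group and the element $[1_R]\in K_0(R)$ has infinite order. Then $R$ has Invariant Matrix Number, i.e. ${\rm M}_i(R)\not\cong {\rm M}_j(R)$ (as rings) for every pair of positive integers $i\neq j$. In particular, if $k$ is a field and $E$ is a finite directed graph such that $[1_{L(E)}]$ has infinite order in $K_0(L(E))$, where $L(E)=L_k(E)$ is the Leavitt path algebra, then $L(E)$ has Invariant Matrix Number.
   Context: $K_0(R)$ denotes the Grothendieck group of finitely generated projective right $R$-modules, and $[1_R]$ is the class of the regular module $R_R$. ${\rm M}_i(R)$ denotes the ring of $i\times i$ matrices over $R$. A finite directed graph $E=(E^0,E^1,r,s)$ has finitely many vertices $E^0$ and edges $E^1$, with range and source maps $r,s:E^1\to E^0$. For a field $k$, the Leavitt path algebra $L_k(E)$ is the $k$-algebra generated by $\{v : v\in E^0\}\cup\{e,e^* : e\in E^1\}$ subject to the relations: $vw=\delta_{v,w}v$ for $v,w\in E^0$; $s(e)e=e=er(e)$ and $r(e)e^*=e^*=e^*s(e)$ for $e\in E^1$; $e^*f=\delta_{e,f}r(e)$ for $e,f\in E^1$; and $v=\sum_{e\in E^1,\,s(e)=v}ee^*$ for every vertex $v$ that emits at least one edge. It is unital with $1=\sum_{v\in E^0}v$ when $E$ is finite. *)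

theory Defs
  imports "Jordan_Normal_Form.Matrix" "HOL-Algebra.Generated_Groups" "HOL-Algebra.QuotRing"
begin

text \<open>K_0 of a unital ring R (a type of class ring_1), via the standard description by
  idempotent square matrices: finitely generated projective right R-modules correspond
  to idempotent matrices P (module P R^n); isomorphism of modules is Murray-von Neumann
  equivalence of idempotents; direct sum is block-diagonal sum. K_0(R) is the
  Grothendieck group of the resulting commutative monoid V(R).\<close>

definition idem_mat :: "'a::ring_1 mat \<Rightarrow> bool" where
  "idem_mat P \<longleftrightarrow> P \<in> carrier_mat (dim_row P) (dim_row P) \<and> P * P = P"

definition mvn_equiv :: "'a::ring_1 mat \<Rightarrow> 'a mat \<Rightarrow> bool" where
  "mvn_equiv P Q \<longleftrightarrow> (\<exists>X Y. X \<in> carrier_mat (dim_row P) (dim_row Q) \<and>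
      Y \<in> carrier_mat (dim_row Q) (dim_row P) \<and> X * Y = P \<and> Y * X = Q)"

definition dsum :: "'a::ring_1 mat \<Rightarrow> 'a mat \<Rightarrow> 'a mat" where
  "dsum P Q = four_block_mat P (0\<^sub>m (dim_row P) (dim_col Q)) (0\<^sub>m (dim_row Q) (dim_col P)) Q"

text \<open>Pairs (P,Q) represent formal differences [P] - [Q].\<close>
definition K0_pairs :: "'a::ring_1 itself \<Rightarrow> ('a mat \<times> 'a mat) set" where
  "K0_pairs ty = {(P, Q). idem_mat P \<and> idem_mat Q}"

definition K0_rel :: "'a::ring_1 itself \<Rightarrow> (('a mat \<times> 'a mat) \<times> ('a mat \<times> 'a mat)) set" where
  "K0_rel ty = {((P, Q), (P', Q')). (P, Q) \<in> K0_pairs ty \<and> (P', Q') \<in> K0_pairs ty \<and>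
      (\<exists>S. idem_mat S \<and> mvn_equiv (dsum (dsum P Q') S) (dsum (dsum P' Q) S))}"

definition K0_class :: "'a::ring_1 itself \<Rightarrow> 'a mat \<times> 'a mat \<Rightarrow> ('a mat \<times> 'a mat) set" where
  "K0_class ty x = K0_rel ty `` {x}"

definition K0 :: "'a::ring_1 itself \<Rightarrow> ('a mat \<times> 'a mat) set monoid" where
  "K0 ty = \<lparr> carrier = K0_pairs ty // K0_rel ty,
            mult = (\<lambda>A B. let a = (SOME a. a \<in> A); b = (SOME b. b \<in> B)
                          in K0_class ty (dsum (fst a) (fst b), dsum (snd a) (snd b))),
            one = K0_class ty (0\<^sub>m 0 0, 0\<^sub>m 0 0) \<rparr>"

definition K0_unit :: "'a::ring_1 itself \<Rightarrow> ('a mat \<times> 'a mat) set" where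
  "K0_unit ty = K0_class ty (1\<^sub>m 1, 0\<^sub>m 0 0)"

definition invariant_matrix_number :: "'a::ring_1 itself \<Rightarrow> bool" where
  "invariant_matrix_number ty \<longleftrightarrow>
     (\<forall>i j::nat. 0 < i \<longrightarrow> 0 < j \<longrightarrow> i \<noteq> j \<longrightarrow>
        \<not> is_ring_iso (ring_mat ty i ()) (ring_mat ty j ()))"

end

theory Submission
  imports Defs Complex_Main "HOL-Algebra.Generated_Groups"
begin

lemma idem_carrier: "idem_mat P \<Longrightarrow> P \<in> carrier_mat (dim_row P) (dim_row P)"
  by (simp add: idem_mat_def)

lemma dsum_carrier:
  "P \<in> carrier_mat a b \<Longrightarrow> Q \<in> carrier_mat c d \<Longrightarrow> dsum P Q \<in> carrier_mat (a+c) (b+d)"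
  unfolding dsum_def by auto

lemma dsum_dims[simp]: "dim_row (dsum P Q) = dim_row P + dim_row Q" "dim_col (dsum P Q) = dim_col P + dim_col Q"
  unfolding dsum_def by auto

lemma dsum_mult:
  assumes "A \<in> carrier_mat a b" "B \<in> carrier_mat b c" "C \<in> carrier_mat d e" "D \<in> carrier_mat e f"
  shows "dsum A C * dsum B D = dsum (A * B) (C * D)"
proof -
  have e: "dim_row A = a" "dim_col A = b" "dim_row B = b" "dim_col B = c" "dim_row C = d" "dim_col C = e"
    "dim_row D = e" "dim_col D = f" using assms by auto
  show ?thesis unfolding dsum_def e
    using assms by (subst mult_four_block_mat[OF assms(1) zero_carrier_mat zero_carrier_mat assms(3) assms(2) zero_carrier_mat zero_carrier_mat assms(4)]) auto
qed

lemma idem_dsum: "idem_mat P \<Longrightarrow> idem_mat Q \<Longrightarrow> idem_mat (dsum P Q)"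
proof -
  assume P: "idem_mat P" and Q: "idem_mat Q"
  have Pc: "P \<in> carrier_mat (dim_row P) (dim_row P)" and Qc: "Q \<in> carrier_mat (dim_row Q) (dim_row Q)"
    using P Q by (auto simp: idem_mat_def)
  have "dsum P Q * dsum P Q = dsum (P * P) (Q * Q)" by (rule dsum_mult[OF Pc Pc Qc Qc])
  also have "\<dots> = dsum P Q" using P Q by (simp add: idem_mat_def)
  finally show ?thesis unfolding idem_mat_def using dsum_carrier[OF Pc Qc] by simp
qed

lemma idem_zero: "idem_mat (0\<^sub>m 0 0 :: 'a::ring_1 mat)"
  unfolding idem_mat_def by auto

lemma idem_one: "idem_mat (1\<^sub>m n :: 'a::ring_1 mat)"
  unfolding idem_mat_def by auto

lemma mvn_refl: "idem_mat P \<Longrightarrow> mvn_equiv P P"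
  unfolding mvn_equiv_def idem_mat_def by auto

lemma mvn_sym: "mvn_equiv P Q \<Longrightarrow> mvn_equiv Q P"
  unfolding mvn_equiv_def by auto

lemma mvn_trans:
  assumes "mvn_equiv P Q" "mvn_equiv Q R" "idem_mat P" "idem_mat R"
  shows "mvn_equiv P (R:: 'a::ring_1 mat)"
proof -
  obtain X Y where X: "X \<in> carrier_mat (dim_row P) (dim_row Q)" and Y: "Y \<in> carrier_mat (dim_row Q) (dim_row P)"
    and XY: "X * Y = P" and YX: "Y * X = Q" using assms(1) unfolding mvn_equiv_def by auto
  obtain X' Y' where X': "X' \<in> carrier_mat (dim_row Q) (dim_row R)" and Y': "Y' \<in> carrier_mat (dim_row R) (dim_row Q)"
    and XY': "X' * Y' = Q" and YX': "Y' * X' = R" using assms(2) unfolding mvn_equiv_def by auto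
  have a1: "(X * X') * (Y' * Y) = X * (X' * (Y' * Y))"
    using X X' Y' Y by (intro assoc_mult_mat) auto
  have a2: "X' * (Y' * Y) = (X' * Y') * Y" using X' Y' Y by (intro assoc_mult_mat[symmetric]) auto
  have a3: "X * ((Y * X) * Y) = (X * Y) * (X * Y)"
  proof -
    have "(Y * X) * Y = Y * (X * Y)" using X Y by (intro assoc_mult_mat) auto
    moreover have "X * (Y * (X * Y)) = (X * Y) * (X * Y)" using X Y by (intro assoc_mult_mat[symmetric]) auto
    ultimately show ?thesis by simp
  qed
  have 1: "(X * X') * (Y' * Y) = P" using a1 a2 a3 XY' YX XY assms(3) by (simp add: idem_mat_def)
  have b1: "(Y' * Y) * (X * X') = Y' * (Y * (X * X'))"
    using X X' Y' Y by (intro assoc_mult_mat) auto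
  have b2: "Y * (X * X') = (Y * X) * X'" using X' X Y by (intro assoc_mult_mat[symmetric]) auto
  have b3: "Y' * ((X' * Y') * X') = (Y' * X') * (Y' * X')"
  proof -
    have "(X' * Y') * X' = X' * (Y' * X')" using X' Y' by (intro assoc_mult_mat) auto
    moreover have "Y' * (X' * (Y' * X')) = (Y' * X') * (Y' * X')" using X' Y' by (intro assoc_mult_mat[symmetric]) auto
    ultimately show ?thesis by simp
  qed
  have 2: "(Y' * Y) * (X * X') = R" using b1 b2 b3 XY' YX YX' assms(4) by (simp add: idem_mat_def)
  have c1: "X * X' \<in> carrier_mat (dim_row P) (dim_row R)" using X X' by simp
  have c2: "Y' * Y \<in> carrier_mat (dim_row R) (dim_row P)" using Y Y' by simp
  show ?thesis unfolding mvn_equiv_def using c1 c2 1 2 by blast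
qed


lemma dsum_index:
  assumes "i < dim_row P + dim_row Q" "j < dim_col P + dim_col Q"
  shows "dsum P Q $$ (i,j) = (if i < dim_row P then (if j < dim_col P then P $$ (i,j) else 0)
     else (if j < dim_col P then 0 else Q $$ (i - dim_row P, j - dim_col P)))"
  using assms unfolding dsum_def four_block_mat_def Let_def
  by (simp del: if_split)
lemma dsum_UL: "i < dim_row P \<Longrightarrow> j < dim_col P \<Longrightarrow> dsum P Q $$ (i,j) = P $$ (i,j)"
  by (subst dsum_index) auto
lemma dsum_UR: "i < dim_row P \<Longrightarrow> \<not> j < dim_col P \<Longrightarrow> j < dim_col P + dim_col Q \<Longrightarrow> dsum P Q $$ (i,j) = 0"
  by (subst dsum_index) auto
lemma dsum_LL: "\<not> i < dim_row P \<Longrightarrow> i < dim_row P + dim_row Q \<Longrightarrow> j < dim_col P \<Longrightarrow> dsum P Q $$ (i,j) = 0"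
  by (subst dsum_index) auto
lemma dsum_LR: "\<not> i < dim_row P \<Longrightarrow> i < dim_row P + dim_row Q \<Longrightarrow> \<not> j < dim_col P \<Longrightarrow> j < dim_col P + dim_col Q \<Longrightarrow>
  dsum P Q $$ (i,j) = Q $$ (i - dim_row P, j - dim_col P)"
  by (subst dsum_index) auto
lemma dsum_assoc: "dsum (dsum P Q) R = dsum P (dsum Q R)"
proof (rule eq_matI)
  fix i j assume i: "i < dim_row (dsum P (dsum Q R))" and j: "j < dim_col (dsum P (dsum Q R))"
  show "dsum (dsum P Q) R $$ (i, j) = dsum P (dsum Q R) $$ (i, j)"
    using i j
    by (cases "i < dim_row P"; cases "i < dim_row P + dim_row Q"; cases "j < dim_col P"; cases "j < dim_col P + dim_col Q";
        simp add: dsum_UL dsum_UR dsum_LL dsum_LR)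
qed auto
lemma dsum_zero_right: "dsum P (0\<^sub>m 0 0) = P"
proof (rule eq_matI)
  fix i j assume i: "i < dim_row P" and j: "j < dim_col P"
  show "dsum P (0\<^sub>m 0 0) $$ (i, j) = P $$ (i, j)" using i j by (simp add: dsum_UL dsum_UR dsum_LL dsum_LR)
qed auto
lemma dsum_zero_left: "dsum (0\<^sub>m 0 0) P = P"
proof (rule eq_matI)
  fix i j assume i: "i < dim_row P" and j: "j < dim_col P"
  show "dsum (0\<^sub>m 0 0) P $$ (i, j) = P $$ (i, j)" using i j by (simp add: dsum_UL dsum_UR dsum_LL dsum_LR)
qed auto
lemma mvn_dsum:
  assumes "mvn_equiv P P'" "mvn_equiv Q Q'"
  shows "mvn_equiv (dsum P Q) (dsum P' Q')"
proof -
  obtain X Y where X: "X \<in> carrier_mat (dim_row P) (dim_row P')" and Y: "Y \<in> carrier_mat (dim_row P') (dim_row P)"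
    and XY: "X * Y = P" and YX: "Y * X = P'" using assms(1) unfolding mvn_equiv_def by auto
  obtain X' Y' where X': "X' \<in> carrier_mat (dim_row Q) (dim_row Q')" and Y': "Y' \<in> carrier_mat (dim_row Q') (dim_row Q)"
    and XY': "X' * Y' = Q" and YX': "Y' * X' = Q'" using assms(2) unfolding mvn_equiv_def by auto
  have 1: "dsum X X' * dsum Y Y' = dsum P Q" using dsum_mult[OF X Y X' Y'] XY XY' by simp
  have 2: "dsum Y Y' * dsum X X' = dsum P' Q'" using dsum_mult[OF Y X Y' X'] YX YX' by simp
  have c1: "dsum X X' \<in> carrier_mat (dim_row (dsum P Q)) (dim_row (dsum P' Q'))" using dsum_carrier[OF X X'] by simp
  have c2: "dsum Y Y' \<in> carrier_mat (dim_row (dsum P' Q')) (dim_row (dsum P Q))" using dsum_carrier[OF Y Y'] by simp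
  show ?thesis unfolding mvn_equiv_def using c1 c2 1 2 by blast
qed

lemma dsum_comm:
  assumes P: "idem_mat P" and Q: "idem_mat (Q :: 'a::ring_1 mat)"
  shows "mvn_equiv (dsum P Q) (dsum Q P)"
proof -
  define p where "p = dim_row P"
  define q where "q = dim_row Q"
  have Pc: "P \<in> carrier_mat p p" and Qc: "Q \<in> carrier_mat q q" using P Q by (auto simp: idem_mat_def p_def q_def)
  have PP: "P * P = P" and QQ: "Q * Q = Q" using P Q by (auto simp: idem_mat_def)
  define X where "X = four_block_mat (0\<^sub>m p q) P Q (0\<^sub>m q p)"
  define Y where "Y = four_block_mat (0\<^sub>m q p) Q P (0\<^sub>m p q)"
  have XY: "X * Y = dsum P Q"
    unfolding X_def Y_def
    apply (subst mult_four_block_mat[OF zero_carrier_mat Pc Qc zero_carrier_mat zero_carrier_mat Qc Pc zero_carrier_mat])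
    using Pc Qc PP QQ by (simp add: dsum_def)
  have YX: "Y * X = dsum Q P"
    unfolding X_def Y_def
    apply (subst mult_four_block_mat[OF zero_carrier_mat Qc Pc zero_carrier_mat zero_carrier_mat Pc Qc zero_carrier_mat])
    using Pc Qc PP QQ by (simp add: dsum_def)
  have c1: "X \<in> carrier_mat (dim_row (dsum P Q)) (dim_row (dsum Q P))" using Pc Qc by (simp add: X_def)
  have c2: "Y \<in> carrier_mat (dim_row (dsum Q P)) (dim_row (dsum P Q))" using Pc Qc by (simp add: Y_def)
  show ?thesis unfolding mvn_equiv_def using c1 c2 XY YX by blast
qed



definition vrel :: "'a::ring_1 mat \<Rightarrow> 'a mat \<Rightarrow> bool" where
  "vrel P Q \<longleftrightarrow> idem_mat P \<and> idem_mat Q \<and> mvn_equiv P Q"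

lemma part_equivp_vrel: "part_equivp vrel"
  apply (rule part_equivpI)
    apply (rule exI[of _ "0\<^sub>m 0 0"]) apply (simp add: vrel_def idem_zero mvn_refl)
   apply (simp add: symp_def vrel_def mvn_sym)
  apply (simp add: transp_def vrel_def) apply (blast intro: mvn_trans)
  done

quotient_type (overloaded) 'a vr = "'a::ring_1 mat" / partial: vrel
  by (rule part_equivp_vrel)

instantiation vr :: (ring_1) comm_monoid_add
begin

lift_definition zero_vr :: "'a vr" is "0\<^sub>m 0 0" by (simp add: vrel_def idem_zero mvn_refl)

lift_definition plus_vr :: "'a vr \<Rightarrow> 'a vr \<Rightarrow> 'a vr" is dsum
  by (simp add: vrel_def idem_dsum mvn_dsum)

instance
proof
  fix a b c :: "'a vr"
  show "a + b + c = a + (b + c)" by transfer (simp add: vrel_def dsum_assoc idem_dsum mvn_refl)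
  show "a + b = b + a" by transfer (simp add: vrel_def idem_dsum dsum_comm)
  show "0 + a = a" by transfer (simp add: vrel_def dsum_zero_left mvn_refl)
qed

end

lemma vr_eq_iff: "idem_mat P \<Longrightarrow> idem_mat Q \<Longrightarrow> (abs_vr P = abs_vr Q) = mvn_equiv P Q"
  by (metis (mono_tags) Quotient3_rel[OF Quotient3_vr] vrel_def mvn_refl)

lemma vr_plus: assumes "idem_mat P" "idem_mat Q" shows "abs_vr (dsum P Q) = abs_vr P + abs_vr Q"
proof -
  have "vrel P P" "vrel Q Q" using assms by (auto simp: vrel_def mvn_refl)
  then have 1: "vrel (rep_vr (abs_vr P)) P" "vrel (rep_vr (abs_vr Q)) Q"
    by (auto intro: Quotient3_rep_abs[OF Quotient3_vr])
  have "vrel (dsum (rep_vr (abs_vr P)) (rep_vr (abs_vr Q))) (dsum P Q)"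
    using 1 by (simp add: vrel_def idem_dsum mvn_dsum)
  then show ?thesis unfolding plus_vr_def by (simp add: Quotient3_rel_abs[OF Quotient3_vr])
qed

lemma vr_zero: "abs_vr (0\<^sub>m 0 0) = 0"
  unfolding zero_vr_def by simp


definition gr :: "('b::comm_monoid_add \<times> 'b) \<Rightarrow> ('b \<times> 'b) \<Rightarrow> bool" where
  "gr x y \<longleftrightarrow> (\<exists>s. fst x + snd y + s = fst y + snd x + s)"

definition al :: "'a::ring_1 mat \<times> 'a mat \<Rightarrow> 'a vr \<times> 'a vr" where
  "al p = (abs_vr (fst p), abs_vr (snd p))"

lemma vr_rep: "vrel (rep_vr s) (rep_vr s)" "abs_vr (rep_vr s) = s"
  using Quotient3_rep_reflp[OF Quotient3_vr] Quotient3_abs_rep[OF Quotient3_vr] by auto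

lemma rep_idem: "idem_mat (rep_vr s)" using vr_rep(1)[of s] by (simp add: vrel_def)

lemma pairs_iff: "p \<in> K0_pairs TYPE('a::ring_1) \<longleftrightarrow> idem_mat (fst p) \<and> idem_mat (snd p)"
  by (cases p) (simp add: K0_pairs_def)

lemma rel_iff: "(p, q) \<in> K0_rel TYPE('a::ring_1) \<longleftrightarrow>
   p \<in> K0_pairs TYPE('a) \<and> q \<in> K0_pairs TYPE('a) \<and> gr (al p) (al q)"
proof (cases p, cases q)
  fix P Q P' Q' :: "'a mat" assume pq: "p = (P, Q)" "q = (P', Q')"
  show ?thesis
  proof (cases "idem_mat P \<and> idem_mat Q \<and> idem_mat P' \<and> idem_mat Q'")
    case False then show ?thesis using pq by (auto simp: K0_rel_def K0_pairs_def)
  next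
    case True
    have "(\<exists>S. idem_mat S \<and> mvn_equiv (dsum (dsum P Q') S) (dsum (dsum P' Q) S)) \<longleftrightarrow>
          (\<exists>s. abs_vr P + abs_vr Q' + s = abs_vr P' + abs_vr Q + s)"
    proof
      assume "\<exists>S. idem_mat S \<and> mvn_equiv (dsum (dsum P Q') S) (dsum (dsum P' Q) S)"
      then obtain S where S: "idem_mat S" "mvn_equiv (dsum (dsum P Q') S) (dsum (dsum P' Q) S)" by blast
      then have "abs_vr (dsum (dsum P Q') S) = abs_vr (dsum (dsum P' Q) S)"
        using True by (subst vr_eq_iff) (auto intro: idem_dsum)
      then show "\<exists>s. abs_vr P + abs_vr Q' + s = abs_vr P' + abs_vr Q + s"
        using True S by (auto simp: vr_plus idem_dsum)
    next
      assume "\<exists>s. abs_vr P + abs_vr Q' + s = abs_vr P' + abs_vr Q + s"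
      then obtain s where s: "abs_vr P + abs_vr Q' + s = abs_vr P' + abs_vr Q + s" by blast
      define S where "S = rep_vr s"
      have S: "idem_mat S" "abs_vr S = s" using rep_idem vr_rep by (auto simp: S_def)
      have "abs_vr (dsum (dsum P Q') S) = abs_vr (dsum (dsum P' Q) S)"
        using True S s by (simp add: vr_plus idem_dsum)
      then have "mvn_equiv (dsum (dsum P Q') S) (dsum (dsum P' Q) S)"
        using True S by (subst (asm) vr_eq_iff) (auto intro: idem_dsum)
      then show "\<exists>S. idem_mat S \<and> mvn_equiv (dsum (dsum P Q') S) (dsum (dsum P' Q) S)"
        using S by blast
    qed
    then show ?thesis using pq True by (simp add: K0_rel_def K0_pairs_def gr_def al_def)
  qed
qed

lemma gr_refl: "gr x x" by (auto simp: gr_def)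
lemma gr_sym: "gr x y \<Longrightarrow> gr y x" unfolding gr_def by metis
lemma gr_trans: "gr x y \<Longrightarrow> gr y z \<Longrightarrow> gr x z"
proof -
  assume "gr x y" "gr y z"
  then obtain s t where s: "fst x + snd y + s = fst y + snd x + s" and t: "fst y + snd z + t = fst z + snd y + t"
    by (auto simp: gr_def)
  have "fst x + snd z + (fst y + snd y + s + t) = (fst x + snd y + s) + (fst y + snd z + t)"
    by (simp add: ac_simps)
  also have "\<dots> = (fst y + snd x + s) + (fst z + snd y + t)" using s t by simp
  also have "\<dots> = fst z + snd x + (fst y + snd y + s + t)" by (simp add: ac_simps)
  finally show "gr x z" unfolding gr_def by blast
qed

lemma equiv_K0: "equiv (K0_pairs TYPE('a::ring_1)) (K0_rel TYPE('a))"
proof (rule equivI)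
  show "refl_on (K0_pairs TYPE('a)) (K0_rel TYPE('a))"
  proof -
    have "\<forall>p q. (p,q) \<in> K0_rel TYPE('a) \<longrightarrow> p \<in> K0_pairs TYPE('a) \<and> q \<in> K0_pairs TYPE('a)"
      by (simp add: rel_iff)
    then show ?thesis unfolding refl_on_def by (auto simp: rel_iff gr_refl)
  qed
  show "sym (K0_rel TYPE('a))" unfolding sym_def by (auto simp: rel_iff gr_sym)
  show "trans (K0_rel TYPE('a))" unfolding trans_def by (auto simp: rel_iff intro: gr_trans)
  have "\<forall>p q. (p,q) \<in> K0_rel TYPE('a) \<longrightarrow> p \<in> K0_pairs TYPE('a) \<and> q \<in> K0_pairs TYPE('a)"
    by (simp add: rel_iff)
  then show "K0_rel TYPE('a) \<subseteq> K0_pairs TYPE('a) \<times> K0_pairs TYPE('a)" by auto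
qed


abbreviation kc :: "'a::ring_1 mat \<times> 'a mat \<Rightarrow> ('a mat \<times> 'a mat) set" where
  "kc \<equiv> K0_class TYPE('a)"

definition psum :: "'a::ring_1 mat \<times> 'a mat \<Rightarrow> 'a mat \<times> 'a mat \<Rightarrow> 'a mat \<times> 'a mat" where
  "psum p q = (dsum (fst p) (fst q), dsum (snd p) (snd q))"

definition vadd :: "'b::comm_monoid_add \<times> 'b \<Rightarrow> 'b \<times> 'b \<Rightarrow> 'b \<times> 'b" where
  "vadd x y = (fst x + fst y, snd x + snd y)"

lemma psum_pairs: "p \<in> K0_pairs TYPE('a::ring_1) \<Longrightarrow> q \<in> K0_pairs TYPE('a) \<Longrightarrow> psum p q \<in> K0_pairs TYPE('a)"
  by (simp add: pairs_iff psum_def idem_dsum)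

lemma al_psum: "p \<in> K0_pairs TYPE('a::ring_1) \<Longrightarrow> q \<in> K0_pairs TYPE('a) \<Longrightarrow> al (psum p q) = vadd (al p) (al q)"
  by (simp add: pairs_iff psum_def al_def vadd_def vr_plus)

lemma gr_vadd: "gr x x' \<Longrightarrow> gr y y' \<Longrightarrow> gr (vadd x y) (vadd x' y')"
proof -
  assume "gr x x'" "gr y y'"
  then obtain s t where s: "fst x + snd x' + s = fst x' + snd x + s" and t: "fst y + snd y' + t = fst y' + snd y + t"
    by (auto simp: gr_def)
  have "fst x + fst y + (snd x' + snd y') + (s + t) = (fst x + snd x' + s) + (fst y + snd y' + t)"
    by (simp add: ac_simps)
  also have "\<dots> = (fst x' + snd x + s) + (fst y' + snd y + t)" using s t by simp
  also have "\<dots> = fst x' + fst y' + (snd x + snd y) + (s + t)" by (simp add: ac_simps)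
  finally show ?thesis unfolding gr_def vadd_def by auto
qed

lemma kc_carrier: "p \<in> K0_pairs TYPE('a::ring_1) \<Longrightarrow> kc p \<in> carrier (K0 TYPE('a))"
  unfolding K0_def K0_class_def by (auto intro: quotientI)

lemma carrier_kc: "A \<in> carrier (K0 TYPE('a::ring_1)) \<Longrightarrow> \<exists>p \<in> K0_pairs TYPE('a). A = kc p"
  unfolding K0_def K0_class_def by (auto elim: quotientE)

lemma kc_eq: "p \<in> K0_pairs TYPE('a::ring_1) \<Longrightarrow> q \<in> K0_pairs TYPE('a) \<Longrightarrow> kc p = kc q \<longleftrightarrow> gr (al p) (al q)"
  unfolding K0_class_def
  using equiv_class_eq_iff[OF equiv_K0, of p q] by (simp add: rel_iff)

lemma kc_mem: "a \<in> kc p \<Longrightarrow> a \<in> K0_pairs TYPE('a::ring_1) \<and> p \<in> K0_pairs TYPE('a) \<and> gr (al p) (al a)"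
  unfolding K0_class_def by (simp add: rel_iff)

lemma kc_self: "p \<in> K0_pairs TYPE('a::ring_1) \<Longrightarrow> p \<in> kc p"
  unfolding K0_class_def by (simp add: rel_iff gr_refl)

lemma some_kc: assumes "p \<in> K0_pairs TYPE('a::ring_1)"
  shows "(SOME a. a \<in> kc p) \<in> K0_pairs TYPE('a) \<and> gr (al p) (al (SOME a. a \<in> kc p))"
  using someI[of "\<lambda>a. a \<in> kc p", OF kc_self[OF assms]] kc_mem by blast

lemma kc_mult: assumes p: "p \<in> K0_pairs TYPE('a::ring_1)" and q: "q \<in> K0_pairs TYPE('a)"
  shows "kc p \<otimes>\<^bsub>K0 TYPE('a)\<^esub> kc q = kc (psum p q)"
proof -
  define a where "a = (SOME a. a \<in> kc p)"
  define b where "b = (SOME b. b \<in> kc q)"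
  have a: "a \<in> K0_pairs TYPE('a)" "gr (al p) (al a)" using some_kc[OF p] by (auto simp: a_def)
  have b: "b \<in> K0_pairs TYPE('a)" "gr (al q) (al b)" using some_kc[OF q] by (auto simp: b_def)
  have "kc p \<otimes>\<^bsub>K0 TYPE('a)\<^esub> kc q = kc (psum a b)"
    unfolding K0_def by (simp add: a_def b_def psum_def Let_def)
  also have "\<dots> = kc (psum p q)"
    using a b p q by (simp add: kc_eq psum_pairs al_psum gr_vadd gr_sym)
  finally show ?thesis .
qed

lemma zero_pair: "(0\<^sub>m 0 0, 0\<^sub>m 0 0) \<in> K0_pairs TYPE('a::ring_1)"
  by (simp add: pairs_iff idem_zero)

lemma K0_one: "\<one>\<^bsub>K0 TYPE('a::ring_1)\<^esub> = kc (0\<^sub>m 0 0, 0\<^sub>m 0 0)"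
  by (simp add: K0_def)

lemma comm_group_K0: "comm_group (K0 TYPE('a::ring_1))"
proof (rule comm_groupI)
  fix x y z assume x: "x \<in> carrier (K0 TYPE('a))" and y: "y \<in> carrier (K0 TYPE('a))" and z: "z \<in> carrier (K0 TYPE('a))"
  obtain p where p: "p \<in> K0_pairs TYPE('a)" "x = kc p" using carrier_kc[OF x] by blast
  obtain q where q: "q \<in> K0_pairs TYPE('a)" "y = kc q" using carrier_kc[OF y] by blast
  obtain r where r: "r \<in> K0_pairs TYPE('a)" "z = kc r" using carrier_kc[OF z] by blast
  show "x \<otimes>\<^bsub>K0 TYPE('a)\<^esub> y \<in> carrier (K0 TYPE('a))"
    using p q by (simp add: kc_mult kc_carrier psum_pairs)
  show "x \<otimes>\<^bsub>K0 TYPE('a)\<^esub> y \<otimes>\<^bsub>K0 TYPE('a)\<^esub> z = x \<otimes>\<^bsub>K0 TYPE('a)\<^esub> (y \<otimes>\<^bsub>K0 TYPE('a)\<^esub> z)"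
    using p q r by (simp add: kc_mult psum_pairs kc_eq al_psum vadd_def gr_def add.assoc)
  show "x \<otimes>\<^bsub>K0 TYPE('a)\<^esub> y = y \<otimes>\<^bsub>K0 TYPE('a)\<^esub> x"
    using p q by (simp add: kc_mult psum_pairs kc_eq al_psum vadd_def gr_def add.commute)
  show "\<one>\<^bsub>K0 TYPE('a)\<^esub> \<otimes>\<^bsub>K0 TYPE('a)\<^esub> x = x"
    using p zero_pair[where 'a='a] by (simp add: K0_one kc_mult psum_def dsum_zero_left)
  show "\<exists>y\<in>carrier (K0 TYPE('a)). y \<otimes>\<^bsub>K0 TYPE('a)\<^esub> x = \<one>\<^bsub>K0 TYPE('a)\<^esub>"
  proof
    let ?q = "(snd p, fst p)"
    have q': "?q \<in> K0_pairs TYPE('a)" using p by (simp add: pairs_iff)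
    show "kc ?q \<in> carrier (K0 TYPE('a))" using q' by (rule kc_carrier)
    show "kc ?q \<otimes>\<^bsub>K0 TYPE('a)\<^esub> x = \<one>\<^bsub>K0 TYPE('a)\<^esub>"
    proof -
      have "al (psum ?q p) = vadd (al ?q) (al p)" using q' p by (simp add: al_psum)
      then have "gr (al (psum ?q p)) (al (0\<^sub>m 0 0, 0\<^sub>m 0 0))"
        by (simp add: al_def vadd_def gr_def vr_zero add.commute)
      then show ?thesis
        using p q' zero_pair[where 'a='a] psum_pairs[OF q' p(1)] by (simp add: K0_one kc_mult kc_eq)
    qed
  qed
next
  show "\<one>\<^bsub>K0 TYPE('a)\<^esub> \<in> carrier (K0 TYPE('a))" using zero_pair[where 'a='a] by (simp add: K0_one kc_carrier)
qed


definition nuhom :: "('a::ring_1 \<Rightarrow> 'a mat) \<Rightarrow> nat \<Rightarrow> bool" where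
  "nuhom h m \<longleftrightarrow> 0 < m \<and> (\<forall>a. h a \<in> carrier_mat m m) \<and> (\<forall>a b. h (a + b) = h a + h b) \<and> (\<forall>a b. h (a * b) = h a * h b)"

definition tmat :: "('a::ring_1 \<Rightarrow> 'a mat) \<Rightarrow> nat \<Rightarrow> 'a mat \<Rightarrow> 'a mat" where
  "tmat h m M = mat (dim_row M * m) (dim_col M * m) (\<lambda>(r,c). h (M $$ (r div m, c div m)) $$ (r mod m, c mod m))"

lemma sum_split_nat: "(\<Sum>u<b*m. g u) = (\<Sum>k<b. \<Sum>w<m. g (k*m + w))" for g :: "nat \<Rightarrow> 'b::comm_monoid_add"
proof -
  have "(\<Sum>u<b*m. g u) = (\<Sum>k<b. sum g {k*m..<k*m+m})" by (rule sum.nat_group[symmetric])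
  also have "\<dots> = (\<Sum>k<b. \<Sum>w<m. g (k*m + w))"
  proof (rule sum.cong[OF refl])
    fix k
    have "sum g {0 + k*m..<m + k*m} = (\<Sum>w = 0..<m. g (w + k*m))" by (rule sum.shift_bounds_nat_ivl)
    then show "sum g {k*m..<k*m+m} = (\<Sum>w<m. g (k*m + w))" by (simp add: atLeast0LessThan add.commute)
  qed
  finally show ?thesis .
qed

context
  fixes h :: "'a::ring_1 \<Rightarrow> 'a mat" and m :: nat
  assumes h: "nuhom h m"
begin

lemma m_pos: "0 < m" using h by (simp add: nuhom_def)
lemma h_carrier: "h a \<in> carrier_mat m m" using h by (simp add: nuhom_def)
lemma h_add: "h (a + b) = h a + h b" using h by (simp add: nuhom_def)
lemma h_mult: "h (a * b) = h a * h b" using h by (simp add: nuhom_def)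

lemma h_zero_idx: "s < m \<Longrightarrow> t < m \<Longrightarrow> h 0 $$ (s,t) = 0"
proof -
  assume st: "s < m" "t < m"
  have "h 0 = h 0 + h 0" using h_add[of 0 0] by simp
  moreover have "(h 0 + h 0) $$ (s,t) = h 0 $$ (s,t) + h 0 $$ (s,t)"
    using st h_carrier[of 0] by (intro index_add_mat(1)) auto
  ultimately have "h 0 $$ (s,t) = h 0 $$ (s,t) + h 0 $$ (s,t)" by simp
  then show ?thesis by simp
qed

lemma h_sum_idx: "finite K \<Longrightarrow> s < m \<Longrightarrow> t < m \<Longrightarrow> h (\<Sum>k\<in>K. f k) $$ (s,t) = (\<Sum>k\<in>K. h (f k) $$ (s,t))"
proof (induction K rule: finite_induct)
  case empty then show ?case using h_zero_idx by simp
next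
  case (insert k K)
  then show ?case using h_carrier[of "f k"] h_carrier[of "sum f K"] by (simp add: h_add)
qed

lemma h_mult_idx: "s < m \<Longrightarrow> t < m \<Longrightarrow> h (a * b) $$ (s,t) = (\<Sum>w<m. h a $$ (s,w) * h b $$ (w,t))"
  using h_carrier[of a] h_carrier[of b] by (simp add: h_mult scalar_prod_def atLeast0LessThan)

lemma tmat_dims[simp]: "dim_row (tmat h m M) = dim_row M * m" "dim_col (tmat h m M) = dim_col M * m"
  by (simp_all add: tmat_def)

lemma tmat_carrier: "M \<in> carrier_mat a b \<Longrightarrow> tmat h m M \<in> carrier_mat (a * m) (b * m)"
  by (intro carrier_matI) (simp_all only: tmat_dims carrier_matD)

lemma tmat_idx: "r < dim_row M * m \<Longrightarrow> c < dim_col M * m \<Longrightarrow>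
  tmat h m M $$ (r, c) = h (M $$ (r div m, c div m)) $$ (r mod m, c mod m)"
  by (simp add: tmat_def)


lemma tmat_mult:
  assumes M: "M \<in> carrier_mat a b" and N: "N \<in> carrier_mat b c"
  shows "tmat h m (M * N) = tmat h m M * tmat h m N"
proof (rule eq_matI)
  fix r s assume r: "r < dim_row (tmat h m M * tmat h m N)" and s: "s < dim_col (tmat h m M * tmat h m N)"
  have ra: "r < a * m" and sc: "s < c * m" using r s M N by auto
  have rd: "r div m < a" and sd: "s div m < c" using ra sc m_pos by (auto simp: div_less_iff_less_mult)
  have rm: "r mod m < m" and sm: "s mod m < m" using m_pos by auto
  have "tmat h m (M * N) $$ (r, s) = h ((M * N) $$ (r div m, s div m)) $$ (r mod m, s mod m)"
    using ra sc M N by (simp add: tmat_idx)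
  also have "(M * N) $$ (r div m, s div m) = (\<Sum>k<b. M $$ (r div m, k) * N $$ (k, s div m))"
    using rd sd M N by (simp add: scalar_prod_def atLeast0LessThan)
  also have "h \<dots> $$ (r mod m, s mod m) = (\<Sum>k<b. \<Sum>w<m. h (M $$ (r div m, k)) $$ (r mod m, w) * h (N $$ (k, s div m)) $$ (w, s mod m))"
    using rm sm by (simp add: h_sum_idx h_mult_idx)
  also have "\<dots> = (\<Sum>u<b*m. tmat h m M $$ (r, u) * tmat h m N $$ (u, s))"
  proof -
    have "(\<Sum>u<b*m. tmat h m M $$ (r, u) * tmat h m N $$ (u, s)) =
      (\<Sum>k<b. \<Sum>w<m. tmat h m M $$ (r, k*m+w) * tmat h m N $$ (k*m+w, s))" by (rule sum_split_nat)
    also have "\<dots> = (\<Sum>k<b. \<Sum>w<m. h (M $$ (r div m, k)) $$ (r mod m, w) * h (N $$ (k, s div m)) $$ (w, s mod m))"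
    proof (intro sum.cong refl)
      fix k w assume k: "k \<in> {..<b}" and w: "w \<in> {..<m}"
      have "Suc k * m \<le> b * m" using k by (intro mult_le_mono1) simp
      then have kw: "k*m + w < b * m" using w by simp
      have dm: "(k*m+w) div m = k" "(k*m+w) mod m = w" using w m_pos by auto
      show "tmat h m M $$ (r, k*m+w) * tmat h m N $$ (k*m+w, s) =
        h (M $$ (r div m, k)) $$ (r mod m, w) * h (N $$ (k, s div m)) $$ (w, s mod m)"
        using ra sc kw M N dm by (simp add: tmat_idx)
    qed
    finally show ?thesis by simp
  qed
  also have "\<dots> = (tmat h m M * tmat h m N) $$ (r, s)"
    using ra sc M N by (simp add: scalar_prod_def atLeast0LessThan)
  finally show "tmat h m (M * N) $$ (r, s) = (tmat h m M * tmat h m N) $$ (r, s)" .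
qed (use M N in auto)

lemma divsub: "p * m \<le> r \<Longrightarrow> (r - p*m) div m = r div m - p \<and> (r - p*m) mod m = r mod m"
proof -
  assume "p * m \<le> r"
  then obtain r' where r: "r = p*m + r'" using le_Suc_ex by blast
  show ?thesis using m_pos unfolding r by simp
qed

lemma divlt: "r < p * m \<longleftrightarrow> r div m < p"
  using m_pos by (simp add: div_less_iff_less_mult)

lemma tmat_dsum: "tmat h m (dsum P Q) = dsum (tmat h m P) (tmat h m Q)"
proof (rule eq_matI)
  fix r c assume r: "r < dim_row (dsum (tmat h m P) (tmat h m Q))" and c: "c < dim_col (dsum (tmat h m P) (tmat h m Q))"
  have r': "r < (dim_row P + dim_row Q) * m" and c': "c < (dim_col P + dim_col Q) * m" using r c by (simp_all add: distrib_right)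
  have rd: "r div m < dim_row P + dim_row Q" and cd: "c div m < dim_col P + dim_col Q"
    using r' c' divlt by blast+
  have rm: "r mod m < m" and cm: "c mod m < m" using m_pos by auto
  have L: "tmat h m (dsum P Q) $$ (r, c) = h (dsum P Q $$ (r div m, c div m)) $$ (r mod m, c mod m)"
    using r' c' by (simp add: tmat_idx)
  show "tmat h m (dsum P Q) $$ (r, c) = dsum (tmat h m P) (tmat h m Q) $$ (r, c)"
  proof (cases "r < dim_row P * m"; cases "c < dim_col P * m")
    assume a: "r < dim_row P * m" "c < dim_col P * m"
    then have "r div m < dim_row P" "c div m < dim_col P" using divlt by blast+
    then show ?thesis using a L by (simp add: dsum_UL tmat_idx)
  next
    assume a: "r < dim_row P * m" "\<not> c < dim_col P * m"
    then have "r div m < dim_row P" "\<not> c div m < dim_col P" using divlt by blast+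
    then show ?thesis using a L cd c r by (simp add: dsum_UR h_zero_idx rm cm distrib_right)
  next
    assume a: "\<not> r < dim_row P * m" "c < dim_col P * m"
    then have "\<not> r div m < dim_row P" "c div m < dim_col P" using divlt by blast+
    then show ?thesis using a L rd c r by (simp add: dsum_LL h_zero_idx rm cm distrib_right)
  next
    assume a: "\<not> r < dim_row P * m" "\<not> c < dim_col P * m"
    then have b: "\<not> r div m < dim_row P" "\<not> c div m < dim_col P" using divlt by blast+
    have e1: "(r - dim_row P * m) div m = r div m - dim_row P" "(r - dim_row P * m) mod m = r mod m"
      using divsub[of "dim_row P" r] a by auto
    have e2: "(c - dim_col P * m) div m = c div m - dim_col P" "(c - dim_col P * m) mod m = c mod m"
      using divsub[of "dim_col P" c] a by auto
    have "dsum (tmat h m P) (tmat h m Q) $$ (r, c) = tmat h m Q $$ (r - dim_row P * m, c - dim_col P * m)"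
      using a r c by (simp add: dsum_LR)
    also have "\<dots> = h (Q $$ (r div m - dim_row P, c div m - dim_col P)) $$ (r mod m, c mod m)"
      using a r' c' e1 e2 by (simp add: tmat_idx distrib_right)
    finally show ?thesis using L b rd cd by (simp add: dsum_LR)
  qed
qed (simp_all add: distrib_right)

lemma tmat_one: "tmat h m (1\<^sub>m 1) = h 1"
proof (rule eq_matI)
  fix r c assume r: "r < dim_row (h 1)" and c: "c < dim_col (h 1)"
  have "r < m" "c < m" using r c h_carrier[of 1] by auto
  then show "tmat h m (1\<^sub>m 1) $$ (r, c) = h 1 $$ (r, c)" by (simp add: tmat_idx)
qed (use h_carrier[of 1] in auto)

lemma tmat_zero00: "tmat h m (0\<^sub>m 0 0) = 0\<^sub>m 0 0"
  by (rule eq_matI) auto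

lemma tmat_idem: "idem_mat P \<Longrightarrow> idem_mat (tmat h m P)"
proof -
  assume P: "idem_mat P"
  have Pc: "P \<in> carrier_mat (dim_row P) (dim_row P)" using P by (simp add: idem_mat_def)
  have "tmat h m P * tmat h m P = tmat h m (P * P)" using tmat_mult[OF Pc Pc] by simp
  also have "\<dots> = tmat h m P" using P by (simp add: idem_mat_def)
  finally show ?thesis unfolding idem_mat_def using tmat_carrier[OF Pc] by simp
qed

lemma tmat_mvn: "mvn_equiv P Q \<Longrightarrow> mvn_equiv (tmat h m P) (tmat h m Q)"
proof -
  assume "mvn_equiv P Q"
  then obtain X Y where X: "X \<in> carrier_mat (dim_row P) (dim_row Q)" and Y: "Y \<in> carrier_mat (dim_row Q) (dim_row P)"
    and XY: "X * Y = P" and YX: "Y * X = Q" unfolding mvn_equiv_def by blast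
  have "tmat h m X * tmat h m Y = tmat h m P" using tmat_mult[OF X Y] XY by simp
  moreover have "tmat h m Y * tmat h m X = tmat h m Q" using tmat_mult[OF Y X] YX by simp
  moreover have "tmat h m X \<in> carrier_mat (dim_row (tmat h m P)) (dim_row (tmat h m Q))" using tmat_carrier[OF X] by simp
  moreover have "tmat h m Y \<in> carrier_mat (dim_row (tmat h m Q)) (dim_row (tmat h m P))" using tmat_carrier[OF Y] by simp
  ultimately show ?thesis unfolding mvn_equiv_def by blast
qed

end

definition tv :: "('a::ring_1 \<Rightarrow> 'a mat) \<Rightarrow> nat \<Rightarrow> 'a vr \<Rightarrow> 'a vr" where
  "tv h m s = abs_vr (tmat h m (rep_vr s))"

definition tpair :: "('a::ring_1 \<Rightarrow> 'a mat) \<Rightarrow> nat \<Rightarrow> 'a mat \<times> 'a mat \<Rightarrow> 'a mat \<times> 'a mat" where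
  "tpair h m p = (tmat h m (fst p), tmat h m (snd p))"

definition tk :: "('a::ring_1 \<Rightarrow> 'a mat) \<Rightarrow> nat \<Rightarrow> ('a mat \<times> 'a mat) set \<Rightarrow> ('a mat \<times> 'a mat) set" where
  "tk h m A = kc (tpair h m (SOME a. a \<in> A))"

lemma gr_map:
  assumes add: "\<And>a b. f (a + b) = f a + f b" and g: "gr x y"
  shows "gr (f (fst x), f (snd x)) (f (fst y), f (snd y))"
proof -
  obtain s where s: "fst x + snd y + s = fst y + snd x + s" using g by (auto simp: gr_def)
  have "f (fst x) + f (snd y) + f s = f (fst y) + f (snd x) + f s" using arg_cong[OF s, of f] by (simp add: add)
  then show ?thesis unfolding gr_def by auto
qed

context
  fixes h :: "'a::ring_1 \<Rightarrow> 'a mat" and m :: nat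
  assumes h: "nuhom h m"
begin

lemma tv_abs: assumes P: "idem_mat P" shows "tv h m (abs_vr P) = abs_vr (tmat h m P)"
proof -
  have "vrel P P" using P by (simp add: vrel_def mvn_refl)
  then have "vrel (rep_vr (abs_vr P)) P" by (rule Quotient3_rep_abs[OF Quotient3_vr])
  then have "mvn_equiv (tmat h m (rep_vr (abs_vr P))) (tmat h m P)" and "idem_mat (rep_vr (abs_vr P))"
    by (auto simp: vrel_def tmat_mvn[OF h])
  then show ?thesis unfolding tv_def using P by (subst vr_eq_iff) (auto simp: tmat_idem[OF h])
qed

lemma tv_plus: "tv h m (s + t) = tv h m s + tv h m t"
proof -
  obtain S T where S: "idem_mat S" "s = abs_vr S" and T: "idem_mat T" "t = abs_vr T"
    using rep_idem vr_rep by metis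
  have "tv h m (s + t) = tv h m (abs_vr (dsum S T))" using S T by (simp add: vr_plus)
  also have "\<dots> = abs_vr (tmat h m (dsum S T))" using S T by (simp add: tv_abs idem_dsum)
  also have "\<dots> = abs_vr (tmat h m S) + abs_vr (tmat h m T)"
    using S T by (simp add: tmat_dsum[OF h] vr_plus tmat_idem[OF h])
  finally show ?thesis using S T by (simp add: tv_abs)
qed

lemma tpair_pairs: "p \<in> K0_pairs TYPE('a) \<Longrightarrow> tpair h m p \<in> K0_pairs TYPE('a)"
  by (simp add: pairs_iff tpair_def tmat_idem[OF h])

lemma al_tpair: "p \<in> K0_pairs TYPE('a) \<Longrightarrow> al (tpair h m p) = (tv h m (fst (al p)), tv h m (snd (al p)))"
  by (simp add: pairs_iff tpair_def al_def tv_abs)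

lemma tk_kc: assumes p: "p \<in> K0_pairs TYPE('a)" shows "tk h m (kc p) = kc (tpair h m p)"
proof -
  define a where "a = (SOME a. a \<in> kc p)"
  have a: "a \<in> K0_pairs TYPE('a)" "gr (al p) (al a)" using some_kc[OF p] by (auto simp: a_def)
  have "gr (al (tpair h m a)) (al (tpair h m p))"
    using gr_map[of "tv h m", OF tv_plus gr_sym[OF a(2)]] a p by (simp add: al_tpair)
  then show ?thesis unfolding tk_def a_def[symmetric] using a p by (simp add: kc_eq tpair_pairs)
qed

lemma tk_hom: "tk h m \<in> hom (K0 TYPE('a)) (K0 TYPE('a))"
proof (rule homI)
  fix x assume x: "x \<in> carrier (K0 TYPE('a))"
  obtain p where p: "p \<in> K0_pairs TYPE('a)" "x = kc p" using carrier_kc[OF x] by blast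
  show "tk h m x \<in> carrier (K0 TYPE('a))" using p by (simp add: tk_kc kc_carrier tpair_pairs)
next
  fix x y assume x: "x \<in> carrier (K0 TYPE('a))" and y: "y \<in> carrier (K0 TYPE('a))"
  obtain p where p: "p \<in> K0_pairs TYPE('a)" "x = kc p" using carrier_kc[OF x] by blast
  obtain q where q: "q \<in> K0_pairs TYPE('a)" "y = kc q" using carrier_kc[OF y] by blast
  have "tpair h m (psum p q) = psum (tpair h m p) (tpair h m q)"
    by (simp add: tpair_def psum_def tmat_dsum[OF h])
  then show "tk h m (x \<otimes>\<^bsub>K0 TYPE('a)\<^esub> y) = tk h m x \<otimes>\<^bsub>K0 TYPE('a)\<^esub> tk h m y"
    using p q by (simp add: kc_mult tk_kc psum_pairs tpair_pairs)
qed

lemma tk_unit: "tk h m (K0_unit TYPE('a)) = kc (h 1, 0\<^sub>m 0 0)"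
proof -
  have "(1\<^sub>m 1, 0\<^sub>m 0 0) \<in> K0_pairs TYPE('a)" by (simp add: pairs_iff idem_one idem_zero)
  then show ?thesis unfolding K0_unit_def using tmat_one[OF h] by (simp add: tk_kc tpair_def tmat_zero00[OF h] One_nat_def)
qed

end

lemma kc_pow:
  assumes p: "p \<in> K0_pairs TYPE('a::ring_1)"
  shows "\<exists>q \<in> K0_pairs TYPE('a). kc p [^]\<^bsub>K0 TYPE('a)\<^esub> (n::nat) = kc q \<and>
     al q = ((\<Sum>_<n. fst (al p)), (\<Sum>_<n. snd (al p)))"
proof (induction n)
  case 0
  show ?case using zero_pair[where 'a='a]
    by (intro bexI[of _ "(0\<^sub>m 0 0, 0\<^sub>m 0 0)"]) (auto simp: K0_one al_def vr_zero)
next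
  case (Suc n)
  then obtain q where q: "q \<in> K0_pairs TYPE('a)" "kc p [^]\<^bsub>K0 TYPE('a)\<^esub> n = kc q"
    "al q = ((\<Sum>_<n. fst (al p)), (\<Sum>_<n. snd (al p)))" by blast
  interpret K: comm_group "K0 TYPE('a)" by (rule comm_group_K0)
  have "kc p [^]\<^bsub>K0 TYPE('a)\<^esub> Suc n = kc (psum q p)" using q p by (simp add: kc_mult)
  moreover have "al (psum q p) = ((\<Sum>_<Suc n. fst (al p)), (\<Sum>_<Suc n. snd (al p)))"
    using q p by (simp add: al_psum vadd_def)
  ultimately show ?case using psum_pairs[OF q(1) p] by blast
qed


lemma one_dsum: "1\<^sub>m (Suc n) = dsum (1\<^sub>m n) (1\<^sub>m 1 :: 'a::ring_1 mat)"
proof (rule eq_matI)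
  fix r c assume r: "r < dim_row (dsum (1\<^sub>m n) (1\<^sub>m 1 :: 'a mat))" and c: "c < dim_col (dsum (1\<^sub>m n) (1\<^sub>m 1 :: 'a mat))"
  then have r': "r < Suc n" and c': "c < Suc n" by auto
  show "1\<^sub>m (Suc n) $$ (r, c) = dsum (1\<^sub>m n) (1\<^sub>m 1 :: 'a mat) $$ (r, c)"
    using r' c' by (cases "r < n"; cases "c < n"; simp add: dsum_UL dsum_UR dsum_LL dsum_LR)
qed auto

lemma one_zero: "1\<^sub>m 0 = (0\<^sub>m 0 0 :: 'a::ring_1 mat)"
  by (rule eq_matI) auto

lemma abs_one: "abs_vr (1\<^sub>m n :: 'a::ring_1 mat) = (\<Sum>_<n. abs_vr (1\<^sub>m 1 :: 'a mat))"
proof (induction n)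
  case 0 then show ?case by (simp add: one_zero vr_zero)
next
  case (Suc n)
  have "abs_vr (1\<^sub>m (Suc n) :: 'a mat) = abs_vr (dsum (1\<^sub>m n) (1\<^sub>m 1 :: 'a mat))" by (simp only: one_dsum)
  also have "\<dots> = abs_vr (1\<^sub>m n :: 'a mat) + abs_vr (1\<^sub>m 1 :: 'a mat)" by (rule vr_plus[OF idem_one idem_one])
  also have "\<dots> = (\<Sum>_<n. abs_vr (1\<^sub>m 1 :: 'a mat)) + abs_vr (1\<^sub>m 1 :: 'a mat)" using Suc by (simp only:)
  finally show ?case by (simp only: sum.lessThan_Suc)
qed

lemma zero_mult_zero: "(0\<^sub>m a b :: 'a::ring_1 mat) * 0\<^sub>m b c = 0\<^sub>m a c"
  by (rule eq_matI) (auto simp: scalar_prod_def)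

lemma abs_zero_mat: "abs_vr (0\<^sub>m n n :: 'a::ring_1 mat) = 0"
proof -
  have "mvn_equiv (0\<^sub>m n n :: 'a mat) (0\<^sub>m 0 0)"
    unfolding mvn_equiv_def
    by (rule exI[of _ "0\<^sub>m n 0"], rule exI[of _ "0\<^sub>m 0 n"]) (simp add: zero_mult_zero)
  moreover have "idem_mat (0\<^sub>m n n :: 'a mat)" by (simp add: idem_mat_def zero_mult_zero)
  ultimately show ?thesis by (simp add: vr_eq_iff idem_zero vr_zero[symmetric])
qed

lemma four_block_trivial:
  assumes "A \<in> carrier_mat n m" "B \<in> carrier_mat n 0" "C \<in> carrier_mat 0 m" "D \<in> carrier_mat 0 0"
  shows "four_block_mat A B C D = A"
proof (rule eq_matI)
  fix i j assume "i < dim_row A" "j < dim_col A"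
  then show "four_block_mat A B C D $$ (i, j) = A $$ (i, j)" using assms by simp
qed (use assms in auto)

lemma orth:
  fixes e1 e2 :: "'a::ring_1 mat"
  assumes c1: "e1 \<in> carrier_mat n n" and c2: "e2 \<in> carrier_mat n n"
    and i1: "e1 * e1 = e1" and i2: "e2 * e2 = e2" and o1: "e1 * e2 = 0\<^sub>m n n" and o2: "e2 * e1 = 0\<^sub>m n n"
  shows "idem_mat (e1 + e2) \<and> abs_vr (e1 + e2) = abs_vr e1 + abs_vr e2"
proof -
  have s: "e1 + e2 \<in> carrier_mat n n" using c1 c2 by simp
  have "(e1 + e2) * (e1 + e2) = e1 * e1 + e2 * e1 + (e1 * e2 + e2 * e2)"
    using c1 c2 by (simp add: add_mult_distrib_mat[of _ n n] mult_add_distrib_mat[of _ n n])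
  also have "\<dots> = e1 + e2" using i1 i2 o1 o2 c1 c2 by simp
  finally have idem: "idem_mat (e1 + e2)" unfolding idem_mat_def using s c2 by simp
  have I1: "idem_mat e1" "idem_mat e2" using c1 c2 i1 i2 by (auto simp: idem_mat_def)
  define X where "X = four_block_mat e1 e2 (0\<^sub>m 0 n) (0\<^sub>m 0 n :: 'a mat)"
  define Y where "Y = four_block_mat e1 (0\<^sub>m n 0) e2 (0\<^sub>m n 0 :: 'a mat)"
  have "X * Y = four_block_mat (e1 * e1 + e2 * e2) (e1 * 0\<^sub>m n 0 + e2 * 0\<^sub>m n 0)
     (0\<^sub>m 0 n * e1 + 0\<^sub>m 0 n * e2) (0\<^sub>m 0 n * 0\<^sub>m n 0 + 0\<^sub>m 0 n * 0\<^sub>m n 0)"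
    unfolding X_def Y_def by (rule mult_four_block_mat[OF c1 c2 zero_carrier_mat zero_carrier_mat c1 zero_carrier_mat c2 zero_carrier_mat])
  also have "\<dots> = four_block_mat (e1 + e2) (0\<^sub>m n 0) (0\<^sub>m 0 n) (0\<^sub>m 0 0)"
    using c1 c2 i1 i2 by (simp add: zero_mult_zero)
  also have "\<dots> = e1 + e2" using c1 c2 by (intro four_block_trivial) auto
  finally have XY: "X * Y = e1 + e2" .
  have "Y * X = four_block_mat (e1 * e1 + 0\<^sub>m n 0 * 0\<^sub>m 0 n) (e1 * e2 + 0\<^sub>m n 0 * 0\<^sub>m 0 n)
     (e2 * e1 + 0\<^sub>m n 0 * 0\<^sub>m 0 n) (e2 * e2 + 0\<^sub>m n 0 * 0\<^sub>m 0 n)"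
    unfolding X_def Y_def by (rule mult_four_block_mat[OF c1 zero_carrier_mat c2 zero_carrier_mat c1 c2 zero_carrier_mat zero_carrier_mat])
  also have "\<dots> = dsum e1 e2" using c1 c2 i1 i2 o1 o2 by (simp add: dsum_def zero_mult_zero)
  finally have YX: "Y * X = dsum e1 e2" .
  have "X \<in> carrier_mat (n + 0) (n + n)" unfolding X_def by (rule four_block_carrier_mat[OF c1 zero_carrier_mat])
  then have "X \<in> carrier_mat (dim_row (e1 + e2)) (dim_row (dsum e1 e2))" using c1 c2 by simp
  moreover have "Y \<in> carrier_mat (n + n) (n + 0)" unfolding Y_def by (rule four_block_carrier_mat[OF c1 zero_carrier_mat])
  then have "Y \<in> carrier_mat (dim_row (dsum e1 e2)) (dim_row (e1 + e2))" using c1 c2 by simp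
  ultimately have "mvn_equiv (e1 + e2) (dsum e1 e2)" unfolding mvn_equiv_def using XY YX by blast
  then have "abs_vr (e1 + e2) = abs_vr (dsum e1 e2)" using idem I1 by (simp add: vr_eq_iff idem_dsum)
  then show ?thesis using idem I1 by (simp add: vr_plus)
qed

definition dg :: "nat \<Rightarrow> (nat \<Rightarrow> 'a::ring_1) \<Rightarrow> 'a mat" where
  "dg n d = mat n n (\<lambda>(r,c). if r = c then d r else 0)"

definition umat :: "nat \<Rightarrow> nat \<Rightarrow> nat \<Rightarrow> 'a::ring_1 mat" where
  "umat n s t = mat n n (\<lambda>(r,c). if r = s \<and> c = t then 1 else 0)"

definition emb :: "nat \<Rightarrow> 'a::ring_1 \<Rightarrow> 'a mat" where
  "emb n a = mat n n (\<lambda>(r,c). if r = 0 \<and> c = 0 then a else 0)"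

lemma dg_mult: "dg n d1 * dg n d2 = dg n (\<lambda>r. d1 r * d2 r)"
proof (rule eq_matI)
  fix r c assume r: "r < dim_row (dg n (\<lambda>r. d1 r * d2 r))" and c: "c < dim_col (dg n (\<lambda>r. d1 r * d2 r))"
  then have rc: "r < n" "c < n" by (auto simp: dg_def)
  have "(dg n d1 * dg n d2) $$ (r, c) = (\<Sum>w\<in>{0..<n}. (if r = w then d1 r else 0) * (if w = c then d2 w else 0))"
    using rc by (simp add: dg_def scalar_prod_def)
  also have "\<dots> = (\<Sum>w\<in>{0..<n}. if w = r then (if r = c then d1 r * d2 r else 0) else 0)"
    by (rule sum.cong) auto
  also have "\<dots> = (if r = c then d1 r * d2 r else 0)" using rc by simp
  finally show "(dg n d1 * dg n d2) $$ (r, c) = dg n (\<lambda>r. d1 r * d2 r) $$ (r, c)" using rc by (simp add: dg_def)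
qed (auto simp: dg_def)

lemma umat_mult: assumes "t < n"
  shows "umat n s t * umat n t v = (umat n s v :: 'a::ring_1 mat)"
proof (rule eq_matI)
  fix r c assume r: "r < dim_row (umat n s v :: 'a mat)" and c: "c < dim_col (umat n s v :: 'a mat)"
  then have rc: "r < n" "c < n" by (auto simp: umat_def)
  have "(umat n s t * umat n t v :: 'a mat) $$ (r, c) = (\<Sum>w\<in>{0..<n}. (if r = s \<and> w = t then 1 else 0) * (if w = t \<and> c = v then 1 else (0::'a)))"
    using rc by (simp add: umat_def scalar_prod_def)
  also have "\<dots> = (\<Sum>w\<in>{0..<n}. if w = t then (if r = s \<and> c = v then 1 else 0) else 0)"
    by (rule sum.cong) auto
  also have "\<dots> = (if r = s \<and> c = v then 1 else 0)" using assms by simp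
  finally show "(umat n s t * umat n t v :: 'a mat) $$ (r, c) = umat n s v $$ (r, c)" using rc by (simp add: umat_def)
qed (auto simp: umat_def)

lemma emb_mult: assumes "0 < n" shows "emb n a * emb n b = emb n (a * b)"
proof (rule eq_matI)
  fix r c assume r: "r < dim_row (emb n (a * b))" and c: "c < dim_col (emb n (a * b))"
  then have rc: "r < n" "c < n" by (auto simp: emb_def)
  have "(emb n a * emb n b) $$ (r, c) = (\<Sum>w\<in>{0..<n}. (if r = 0 \<and> w = 0 then a else 0) * (if w = 0 \<and> c = 0 then b else 0))"
    using rc by (simp add: emb_def scalar_prod_def)
  also have "\<dots> = (\<Sum>w\<in>{0..<n}. if w = 0 then (if r = 0 \<and> c = 0 then a * b else 0) else 0)"
    by (rule sum.cong) auto
  also have "\<dots> = (if r = 0 \<and> c = 0 then a * b else 0)" using assms by simp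
  finally show "(emb n a * emb n b) $$ (r, c) = emb n (a * b) $$ (r, c)" using rc by (simp add: emb_def)
qed (auto simp: emb_def)

lemma emb_add: "emb n (a + b) = emb n a + emb n b"
  by (rule eq_matI) (auto simp: emb_def)

lemma emb_one: "emb n 1 = umat n 0 0"
  by (rule eq_matI) (auto simp: emb_def umat_def)

lemma umat_diag: "umat n k k = dg n (\<lambda>r. if r = k then 1 else 0)"
  by (rule eq_matI) (auto simp: dg_def umat_def)

lemma dg_zero: "dg n (\<lambda>_. 0) = 0\<^sub>m n n"
  by (rule eq_matI) (auto simp: dg_def)

lemma dg_one: "dg n (\<lambda>r. if r < n then 1 else 0) = 1\<^sub>m n"
  by (rule eq_matI) (auto simp: dg_def)

lemma dg_add: "dg n d1 + dg n d2 = dg n (\<lambda>r. d1 r + d2 r)"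
  by (rule eq_matI) (auto simp: dg_def)

lemma dg_carrier[simp]: "dg n d \<in> carrier_mat n n" by (simp add: dg_def)
lemma umat_carrier[simp]: "umat n s t \<in> carrier_mat n n" by (simp add: umat_def)
lemma emb_carrier[simp]: "emb n a \<in> carrier_mat n n" by (simp add: emb_def)

context
  fixes f :: "'a::ring_1 mat \<Rightarrow> 'a mat" and i j :: nat
  assumes i0: "0 < i" and j0: "0 < j"
    and fc: "\<And>A. A \<in> carrier_mat i i \<Longrightarrow> f A \<in> carrier_mat j j"
    and fadd: "\<And>A B. A \<in> carrier_mat i i \<Longrightarrow> B \<in> carrier_mat i i \<Longrightarrow> f (A + B) = f A + f B"
    and fmul: "\<And>A B. A \<in> carrier_mat i i \<Longrightarrow> B \<in> carrier_mat i i \<Longrightarrow> f (A * B) = f A * f B"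
    and f1: "f (1\<^sub>m i) = 1\<^sub>m j"
begin

lemma f_zero: "f (0\<^sub>m i i) = 0\<^sub>m j j"
proof (rule eq_matI)
  have c: "f (0\<^sub>m i i) \<in> carrier_mat j j" by (rule fc) simp
  have e: "f (0\<^sub>m i i) = f (0\<^sub>m i i) + f (0\<^sub>m i i)" using fadd[of "0\<^sub>m i i" "0\<^sub>m i i"] by simp
  fix r c assume r: "r < dim_row (0\<^sub>m j j :: 'a mat)" and cc: "c < dim_col (0\<^sub>m j j :: 'a mat)"
  have "f (0\<^sub>m i i) $$ (r, c) = f (0\<^sub>m i i) $$ (r, c) + f (0\<^sub>m i i) $$ (r, c)"
    using r cc c by (subst e, subst index_add_mat(1)) auto
  then show "f (0\<^sub>m i i) $$ (r, c) = 0\<^sub>m j j $$ (r, c)" using r cc by simp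
qed (use fc[of "0\<^sub>m i i"] in auto)

lemma nuhom_f: "nuhom (\<lambda>a. f (emb i a)) j"
  unfolding nuhom_def using j0 i0 by (auto simp: fc emb_add fadd emb_mult[symmetric] fmul)

lemma idem_f: "A \<in> carrier_mat i i \<Longrightarrow> A * A = A \<Longrightarrow> idem_mat (f A)"
  unfolding idem_mat_def using fc fmul by (metis carrier_matD(1))

lemma f_umat_equiv: assumes k: "k < i" shows "abs_vr (f (umat i k k)) = abs_vr (f (umat i 0 0))"
proof -
  have "f (umat i k k) = f (umat i k 0 * umat i 0 k)" using umat_mult[of 0 i k k, where 'a='a] i0 by simp
  also have "\<dots> = f (umat i k 0) * f (umat i 0 k)" by (rule fmul) simp_all
  finally have XY: "f (umat i k 0) * f (umat i 0 k) = f (umat i k k)" by simp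
  have "f (umat i 0 0) = f (umat i 0 k * umat i k 0)" using umat_mult[of k i 0 0, where 'a='a] k by simp
  also have "\<dots> = f (umat i 0 k) * f (umat i k 0)" by (rule fmul) simp_all
  finally have YX: "f (umat i 0 k) * f (umat i k 0) = f (umat i 0 0)" by simp
  have cX: "f (umat i k 0) \<in> carrier_mat j j" "f (umat i 0 k) \<in> carrier_mat j j" by (auto intro: fc)
  have "mvn_equiv (f (umat i k k)) (f (umat i 0 0))"
  proof -
    have "dim_row (f (umat i k k)) = j" "dim_row (f (umat i 0 0)) = j" using fc[of "umat i k k"] fc[of "umat i 0 0"] by auto
    then show ?thesis unfolding mvn_equiv_def using XY YX cX by auto
  qed
  moreover have "idem_mat (f (umat i k k))" "idem_mat (f (umat i 0 0))"
    using umat_mult[of k i k k, where 'a='a] umat_mult[of 0 i 0 0, where 'a='a] k i0 by (auto intro: idem_f)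
  ultimately show ?thesis by (simp add: vr_eq_iff)
qed

definition dk :: "nat \<Rightarrow> 'a mat" where "dk k = dg i (\<lambda>r. if r < k then 1 else 0)"

lemma f_dk: "k \<le> i \<Longrightarrow> idem_mat (f (dk k)) \<and> abs_vr (f (dk k)) = (\<Sum>_<k. abs_vr (f (umat i 0 0)))"
proof (induction k)
  case 0
  have "dk 0 = 0\<^sub>m i i" unfolding dk_def using dg_zero[of i] by simp
  then show ?case using f_zero abs_zero_mat[of j] idem_f[of "0\<^sub>m i i"] by (simp add: zero_mult_zero)
next
  case (Suc k)
  then have k: "k < i" by simp
  have IH: "idem_mat (f (dk k))" "abs_vr (f (dk k)) = (\<Sum>_<k. abs_vr (f (umat i 0 0)))" using Suc by auto
  have e: "dk (Suc k) = dk k + umat i k k" unfolding dk_def umat_diag dg_add by (rule arg_cong[where f="dg i"]) auto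
  have o1: "dk k * umat i k k = 0\<^sub>m i i" unfolding dk_def umat_diag dg_mult dg_zero[symmetric]
    by (rule arg_cong[where f="dg i"]) auto
  have o2: "umat i k k * dk k = 0\<^sub>m i i" unfolding dk_def umat_diag dg_mult dg_zero[symmetric]
    by (rule arg_cong[where f="dg i"]) auto
  have i1: "dk k * dk k = dk k" unfolding dk_def dg_mult by (rule arg_cong[where f="dg i"]) auto
  have i2: "umat i k k * umat i k k = (umat i k k :: 'a mat)" using umat_mult[of k i k k, where 'a='a] k by simp
  have dc: "dk k \<in> carrier_mat i i" by (simp add: dk_def)
  have fe: "f (dk (Suc k)) = f (dk k) + f (umat i k k)" using e fadd dc by simp
  have "idem_mat (f (dk k) + f (umat i k k)) \<and> abs_vr (f (dk k) + f (umat i k k)) = abs_vr (f (dk k)) + abs_vr (f (umat i k k))"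
    by (rule orth[OF fc[OF dc] fc[OF umat_carrier]])
       (use fmul[of "dk k" "dk k"] fmul[of "umat i k k" "umat i k k"] fmul[of "dk k" "umat i k k"] fmul[of "umat i k k" "dk k"]
         dc i1 i2 o1 o2 f_zero in auto)
  then show ?case using fe IH f_umat_equiv[OF k] by simp
qed

lemma key_vfact: "(\<Sum>_<i. abs_vr (f (emb i 1))) = (\<Sum>_<j. abs_vr (1\<^sub>m 1 :: 'a mat))"
proof -
  have "dk i = 1\<^sub>m i" unfolding dk_def by (rule dg_one)
  then have "abs_vr (f (dk i)) = abs_vr (1\<^sub>m j :: 'a mat)" using f1 by simp
  then show ?thesis using f_dk[of i] abs_one[of j] by (simp add: emb_one)
qed

end


context comm_group
begin

definition qhom :: "('a \<Rightarrow> rat) \<Rightarrow> 'a set \<Rightarrow> bool" where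
  "qhom \<psi> H \<longleftrightarrow> (\<forall>a\<in>H. \<forall>b\<in>H. \<psi> (a \<otimes> b) = \<psi> a + \<psi> b)"

lemma qhom_one: assumes "qhom \<psi> H" "subgroup H G" shows "\<psi> \<one> = 0"
proof -
  have "\<one> \<in> H" using assms(2) by (rule subgroup.one_closed)
  then have "\<psi> (\<one> \<otimes> \<one>) = \<psi> \<one> + \<psi> \<one>" using assms(1) unfolding qhom_def by blast
  then show ?thesis by simp
qed

lemma qhom_inv: assumes "qhom \<psi> H" "subgroup H G" "a \<in> H" shows "\<psi> (inv a) = - \<psi> a"
proof -
  have ai: "inv a \<in> H" using assms by (simp add: subgroup.m_inv_closed)
  have ac: "a \<in> carrier G" using assms subgroup.subset by blast
  have "\<psi> (a \<otimes> inv a) = \<psi> a + \<psi> (inv a)" using assms(1,3) ai unfolding qhom_def by blast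
  then show ?thesis using ac qhom_one[OF assms(1,2)] by simp
qed

lemma qhom_nat_pow: assumes "qhom \<psi> H" "subgroup H G" "a \<in> H" shows "\<psi> (a [^] (n::nat)) = of_nat n * \<psi> a"
proof (induction n)
  case 0 then show ?case using qhom_one[OF assms(1,2)] by simp
next
  case (Suc n)
  have "a [^] n \<in> H" using subgroup_int_pow_closed[OF assms(2,3), of "int n"] by (simp add: int_pow_int)
  then have "\<psi> (a [^] n \<otimes> a) = \<psi> (a [^] n) + \<psi> a" using assms(1,3) unfolding qhom_def by blast
  then show ?case using Suc by (simp add: algebra_simps)
qed

lemma qhom_int_pow: assumes "qhom \<psi> H" "subgroup H G" "a \<in> H" shows "\<psi> (a [^] (k::int)) = of_int k * \<psi> a"
proof (cases "k \<ge> 0")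
  case True
  then obtain n where "k = int n" by (intro that[of "nat k"]) auto
  then show ?thesis using qhom_nat_pow[OF assms] by (simp add: int_pow_int)
next
  case False
  then obtain n where n: "k = - int n" by (intro that[of "nat (-k)"]) auto
  have ac: "a \<in> carrier G" using assms subgroup.subset by blast
  have "a [^] n \<in> H" using subgroup_int_pow_closed[OF assms(2,3), of "int n"] by (simp add: int_pow_int)
  then show ?thesis using n qhom_nat_pow[OF assms] qhom_inv[OF assms(1,2)] ac by (simp add: int_pow_neg_int)
qed


lemma gen_insert:
  assumes A: "A \<subseteq> carrier G" and g: "g \<in> carrier G"
  shows "generate G (insert g A) = {h \<otimes> g [^] (k::int) | h k. h \<in> generate G A}"
proof
  let ?R = "{h \<otimes> g [^] (k::int) | h k. h \<in> generate G A}"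
  have HA: "subgroup (generate G A) G" using A by (rule generate_is_subgroup)
  have HAc: "generate G A \<subseteq> carrier G" using HA subgroup.subset by blast
  have sub: "subgroup ?R G"
  proof (rule subgroupI)
    show "?R \<subseteq> carrier G" using HAc g by auto
    show "?R \<noteq> {}" using subgroup.one_closed[OF HA] by blast
    fix a b assume a: "a \<in> ?R" and b: "b \<in> ?R"
    obtain h and k :: int where hk: "h \<in> generate G A" "a = h \<otimes> g [^] k" using a by blast
    obtain h' and k' :: int where hk': "h' \<in> generate G A" "b = h' \<otimes> g [^] k'" using b by blast
    have hc: "h \<in> carrier G" "h' \<in> carrier G" using hk hk' HAc by auto
    have "inv a = inv h \<otimes> g [^] (- k)" using hk hc g by (simp add: inv_mult int_pow_neg)
    moreover have "inv h \<in> generate G A" using hk HA by (simp add: subgroup.m_inv_closed)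
    ultimately show "inv a \<in> ?R" by blast
    have "a \<otimes> b = (h \<otimes> h') \<otimes> g [^] (k + k')" using hk hk' hc g
      by (simp add: int_pow_mult m_ac)
    moreover have "h \<otimes> h' \<in> generate G A" using hk hk' HA by (simp add: subgroup.m_closed)
    ultimately show "a \<otimes> b \<in> ?R" by blast
  qed
  have "insert g A \<subseteq> ?R"
  proof
    fix y assume "y \<in> insert g A"
    then consider "y = g" | "y \<in> A" by blast
    then show "y \<in> ?R"
    proof cases
      case 1
      have "y = \<one> \<otimes> g [^] (1::int)" using 1 g by simp
      then show ?thesis using subgroup.one_closed[OF HA] by blast
    next
      case 2
      have "y = y \<otimes> g [^] (0::int)" using 2 A by auto
      then show ?thesis using 2 generate.incl[of y A G] by blast
    qed
  qed
  then show "generate G (insert g A) \<subseteq> ?R" using sub by (rule generate_subgroup_incl)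
next
  have HB: "subgroup (generate G (insert g A)) G" using A g by (intro generate_is_subgroup) auto
  show "{h \<otimes> g [^] (k::int) | h k. h \<in> generate G A} \<subseteq> generate G (insert g A)"
  proof
    fix y assume "y \<in> {h \<otimes> g [^] (k::int) | h k. h \<in> generate G A}"
    then obtain h and k :: int where hk: "h \<in> generate G A" "y = h \<otimes> g [^] k" by blast
    have "h \<in> generate G (insert g A)" using hk mono_generate[of A "insert g A"] by blast
    moreover have "g [^] k \<in> generate G (insert g A)"
      using subgroup_int_pow_closed[OF HB generate.incl[of g "insert g A" G]] by simp
    ultimately show "y \<in> generate G (insert g A)" using hk HB by (simp add: subgroup.m_closed)
  qed
qed

lemma qhom_ext:
  assumes A: "A \<subseteq> carrier G" and g: "g \<in> carrier G" and psi: "qhom \<psi> (generate G A)"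
  shows "\<exists>\<psi>'. qhom \<psi>' (generate G (insert g A)) \<and> (\<forall>h\<in>generate G A. \<psi>' h = \<psi> h) \<and>
     ((\<forall>m::nat. 0 < m \<longrightarrow> g [^] m \<notin> generate G A) \<longrightarrow> \<psi>' g = c0)"
proof -
  let ?H = "generate G A"
  have HA: "subgroup ?H G" using A by (rule generate_is_subgroup)
  have HAc: "?H \<subseteq> carrier G" using HA subgroup.subset by blast
  define c where "c = (if \<exists>m::nat. 0 < m \<and> g [^] m \<in> ?H
      then \<psi> (g [^] (SOME m::nat. 0 < m \<and> g [^] m \<in> ?H)) / of_nat (SOME m::nat. 0 < m \<and> g [^] m \<in> ?H) else c0)"
  have key: "\<psi> (g [^] k) = of_int k * c" if gk: "g [^] k \<in> ?H" for k :: int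
  proof (cases "k = 0")
    case True then show ?thesis using qhom_one[OF psi HA] by simp
  next
    case False
    have gn: "g [^] (int (nat \<bar>k\<bar>)) \<in> ?H"
    proof (cases "k \<ge> 0")
      case True then show ?thesis using gk by simp
    next
      case False
      then have kk: "int (nat \<bar>k\<bar>) = - k" by simp
      have "g [^] (int (nat \<bar>k\<bar>)) = inv (g [^] k)" by (simp only: kk int_pow_neg[OF g])
      then show ?thesis using gk HA by (simp add: subgroup.m_inv_closed)
    qed
    have ex: "\<exists>m::nat. 0 < m \<and> g [^] m \<in> ?H"
      using gn False by (intro exI[of _ "nat \<bar>k\<bar>"]) (simp add: int_pow_int)
    define m where "m = (SOME m::nat. 0 < m \<and> g [^] m \<in> ?H)"
    have m: "0 < m" "g [^] m \<in> ?H" using someI_ex[OF ex] by (auto simp: m_def)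
    have cm: "c = \<psi> (g [^] m) / of_nat m" using ex by (simp add: c_def m_def)
    have gm: "g [^] (int m) \<in> ?H" using m by (simp add: int_pow_int)
    have e1: "\<psi> ((g [^] k) [^] (int m)) = of_int (int m) * \<psi> (g [^] k)" by (rule qhom_int_pow[OF psi HA gk])
    have e2: "\<psi> ((g [^] (int m)) [^] k) = of_int k * \<psi> (g [^] (int m))" by (rule qhom_int_pow[OF psi HA gm])
    have eq: "(g [^] k) [^] (int m) = (g [^] (int m)) [^] k" using g by (simp add: int_pow_pow mult.commute)
    have "of_nat m * \<psi> (g [^] k) = of_int k * \<psi> (g [^] m)" using e1 e2 eq by (simp add: int_pow_int)
    moreover have "\<psi> (g [^] m) = of_nat m * c" using cm m(1) by simp
    ultimately have "of_nat m * \<psi> (g [^] k) = of_nat m * (of_int k * c)" by (simp add: algebra_simps)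
    then show ?thesis using m(1) by simp
  qed
  define \<psi>' where "\<psi>' y = (SOME v. \<exists>h\<in>?H. \<exists>k::int. y = h \<otimes> g [^] k \<and> v = \<psi> h + of_int k * c)" for y
  have wd: "\<psi> h + of_int k * c = \<psi> h' + of_int k' * c"
    if h: "h \<in> ?H" "h' \<in> ?H" and e: "h \<otimes> g [^] k = h' \<otimes> g [^] k'" for h h' k k'
  proof -
    have hc: "h \<in> carrier G" "h' \<in> carrier G" using h HAc by auto
    have "g [^] k = inv h \<otimes> (h' \<otimes> g [^] k')" using inv_solve_left[of "g [^] k" h "h' \<otimes> g [^] k'"] hc g e by simp
    then have "g [^] (k - k') = inv h \<otimes> h'" using hc g by (simp add: int_pow_diff m_assoc)
    moreover have "inv h \<otimes> h' \<in> ?H" using h HA by (simp add: subgroup.m_inv_closed subgroup.m_closed)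
    moreover have "\<psi> (inv h \<otimes> h') = - \<psi> h + \<psi> h'"
      using psi h qhom_inv[OF psi HA h(1)] subgroup.m_inv_closed[OF HA h(1)] unfolding qhom_def by simp
    ultimately have "of_int (k - k') * c = - \<psi> h + \<psi> h'" using key by metis
    then show ?thesis by (simp add: algebra_simps)
  qed
  have val: "\<psi>' (h \<otimes> g [^] k) = \<psi> h + of_int k * c" if h: "h \<in> ?H" for h k
  proof -
    have "\<exists>v. \<exists>h'\<in>?H. \<exists>k'::int. h \<otimes> g [^] k = h' \<otimes> g [^] k' \<and> v = \<psi> h' + of_int k' * c"
      using h by blast
    from someI_ex[OF this] obtain h' k' where h': "h' \<in> ?H" "h \<otimes> g [^] k = h' \<otimes> g [^] k'"
      "\<psi>' (h \<otimes> g [^] k) = \<psi> h' + of_int k' * c" unfolding \<psi>'_def by blast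
    then show ?thesis using wd[OF h h'(1) h'(2)] by simp
  qed
  have gi: "generate G (insert g A) = {h \<otimes> g [^] (k::int) | h k. h \<in> ?H}" by (rule gen_insert[OF A g])
  have q: "qhom \<psi>' (generate G (insert g A))"
    unfolding qhom_def
  proof (intro ballI)
    fix a b assume a: "a \<in> generate G (insert g A)" and b: "b \<in> generate G (insert g A)"
    obtain h and k :: int where hk: "h \<in> ?H" "a = h \<otimes> g [^] k" using a gi by blast
    obtain h' and k' :: int where hk': "h' \<in> ?H" "b = h' \<otimes> g [^] k'" using b gi by blast
    have hc: "h \<in> carrier G" "h' \<in> carrier G" using hk hk' HAc by auto
    have "a \<otimes> b = (h \<otimes> h') \<otimes> g [^] (k + k')" using hk hk' hc g by (simp add: int_pow_mult m_ac)
    moreover have "h \<otimes> h' \<in> ?H" using hk hk' HA by (simp add: subgroup.m_closed)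
    moreover have "\<psi> (h \<otimes> h') = \<psi> h + \<psi> h'" using psi hk hk' unfolding qhom_def by blast
    ultimately show "\<psi>' (a \<otimes> b) = \<psi>' a + \<psi>' b" using hk hk' val by (simp add: algebra_simps)
  qed
  have ex: "\<forall>h\<in>?H. \<psi>' h = \<psi> h"
  proof
    fix h assume h: "h \<in> ?H"
    then have "h = h \<otimes> g [^] (0::int)" using HAc by auto
    then show "\<psi>' h = \<psi> h" using val[OF h, of 0] by simp
  qed
  have "\<psi>' g = c"
  proof -
    have "g = \<one> \<otimes> g [^] (1::int)" using g by simp
    then show ?thesis using val[OF subgroup.one_closed[OF HA], of 1] qhom_one[OF psi HA] by simp
  qed
  then have "(\<forall>m::nat. 0 < m \<longrightarrow> g [^] m \<notin> ?H) \<longrightarrow> \<psi>' g = c0" by (auto simp: c_def)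
  then show ?thesis using q ex by blast
qed

lemma psi_exists:
  assumes S: "finite S" "S \<subseteq> carrier G" and x: "x \<in> carrier G"
    and inf: "\<forall>n::nat. 0 < n \<longrightarrow> x [^] n \<noteq> \<one>"
  shows "\<exists>\<psi>. qhom \<psi> (generate G (insert x S)) \<and> \<psi> x = 1"
  using S
proof (induction S rule: finite_induct)
  case empty
  have q0: "qhom (\<lambda>_. 0) (generate G {})" by (simp add: qhom_def)
  have nm: "\<forall>m::nat. 0 < m \<longrightarrow> x [^] m \<notin> generate G {}" using inf by (simp add: generate_empty)
  obtain \<psi>' where "qhom \<psi>' (generate G (insert x {}))" "(\<forall>m::nat. 0 < m \<longrightarrow> x [^] m \<notin> generate G {}) \<longrightarrow> \<psi>' x = 1"
    using qhom_ext[OF _ x q0, of 1] by auto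
  then show ?case using nm by blast
next
  case (insert s F)
  then obtain \<psi> where psi: "qhom \<psi> (generate G (insert x F))" "\<psi> x = 1" by auto
  have A: "insert x F \<subseteq> carrier G" using insert x by auto
  have s: "s \<in> carrier G" using insert by auto
  obtain \<psi>' where "qhom \<psi>' (generate G (insert s (insert x F)))" "\<forall>h\<in>generate G (insert x F). \<psi>' h = \<psi> h"
    using qhom_ext[OF A s psi(1), of 0] by auto
  moreover have "x \<in> generate G (insert x F)" by (rule generate.incl) simp
  ultimately show ?case using psi(2) by (metis insert_commute)
qed

lemma denom_bound:
  assumes S: "finite S" "S \<subseteq> carrier G" and gen: "generate G S = carrier G"
    and psi: "qhom \<psi> (carrier G)"
  shows "\<exists>d::int. 0 < d \<and> (\<forall>y\<in>carrier G. of_int d * \<psi> y \<in> \<int>)"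
proof -
  define d where "d = (\<Prod>s\<in>S. snd (quotient_of (\<psi> s)))"
  have dpos: "0 < d" unfolding d_def using quotient_of_denom_pos' by (intro prod_pos) auto
  have ds: "of_int d * \<psi> s \<in> \<int>" if s: "s \<in> S" for s
  proof -
    obtain a b where ab: "quotient_of (\<psi> s) = (a, b)" by (cases "quotient_of (\<psi> s)") auto
    have "\<psi> s = of_int a / of_int b" using quotient_of_div[OF ab] .
    moreover have "b > 0" using quotient_of_denom_pos[OF ab] .
    moreover have "d = b * (\<Prod>t\<in>S - {s}. snd (quotient_of (\<psi> t)))"
      unfolding d_def using S(1) s ab by (simp add: prod.remove)
    ultimately have "of_int d * \<psi> s = of_int (a * (\<Prod>t\<in>S - {s}. snd (quotient_of (\<psi> t))))"
      by (simp add: field_simps)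
    then show ?thesis by (simp only: Ints_of_int)
  qed
  have sub: "subgroup (carrier G) G" by (rule subgroup_self)
  have "of_int d * \<psi> y \<in> \<int>" if y: "y \<in> generate G S" for y
    using y
  proof (induction rule: generate.induct)
    case one then show ?case using qhom_one[OF psi sub] by simp
  next
    case (incl h) then show ?case using ds by simp
  next
    case (inv h)
    have "\<psi> (inv h) = - \<psi> h" using qhom_inv[OF psi sub] inv S by auto
    then show ?case using ds[OF inv] by (metis Ints_minus mult_minus_right)
  next
    case (eng h1 h2)
    have "h1 \<in> carrier G" "h2 \<in> carrier G" using eng(1,2) gen by auto
    then have "\<psi> (h1 \<otimes> h2) = \<psi> h1 + \<psi> h2" using psi unfolding qhom_def by blast
    then show ?case using eng(3,4) by (simp add: distrib_left)
  qed
  then show ?thesis using dpos gen by auto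
qed

lemma funpow_hom:
  assumes t: "t \<in> hom G G" and y: "y \<in> carrier G"
  shows "(t ^^ n) y \<in> carrier G \<and> (t ^^ n) (y [^] (m::nat)) = ((t ^^ n) y) [^] m"
  using y
proof (induction n arbitrary: y)
  case 0 then show ?case by simp
next
  case (Suc n)
  have tc: "\<And>z. z \<in> carrier G \<Longrightarrow> t z \<in> carrier G" using t by (auto simp: hom_def)
  have "(t ^^ Suc n) y = t ((t ^^ n) y)" by simp
  moreover have "(t ^^ Suc n) (y [^] m) = t ((t ^^ n) (y [^] m))" by simp
  ultimately show ?case using Suc tc hom_nat_pow[OF t _ is_group is_group] by simp
qed

lemma funpow_chain:
  assumes t: "t \<in> hom G G" and x: "x \<in> carrier G" and e: "t (x [^] (i::nat)) = x [^] (j::nat)"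
  shows "(t ^^ n) (x [^] (i ^ n)) = x [^] (j ^ n)"
proof (induction n)
  case 0 then show ?case by simp
next
  case (Suc n)
  have xi: "x [^] i \<in> carrier G" using x by simp
  have "(t ^^ Suc n) (x [^] (i ^ Suc n)) = t ((t ^^ n) ((x [^] (i ^ n)) [^] i))"
    using x by (simp add: nat_pow_pow mult.commute)
  also have "(t ^^ n) ((x [^] (i ^ n)) [^] i) = ((t ^^ n) (x [^] (i ^ n))) [^] i"
    using funpow_hom[OF t, of "x [^] (i ^ n)" n i] x by simp
  also have "\<dots> = (x [^] i) [^] (j ^ n)" using Suc x by (simp add: nat_pow_pow mult.commute)
  also have "t \<dots> = (t (x [^] i)) [^] (j ^ n)" using hom_nat_pow[OF t xi is_group is_group] .
  also have "\<dots> = x [^] (j ^ Suc n)" using e x by (simp add: nat_pow_pow)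
  finally show ?case .
qed

lemma grp_dvd:
  assumes S: "finite S" "S \<subseteq> carrier G" and gen: "generate G S = carrier G" and x: "x \<in> carrier G"
    and inf: "\<forall>n::nat. 0 < n \<longrightarrow> x [^] n \<noteq> \<one>"
  shows "\<exists>d::int. 0 < d \<and> (\<forall>t i j n. t \<in> hom G G \<longrightarrow> t (x [^] (i::nat)) = x [^] (j::nat) \<longrightarrow> int i ^ n dvd d * int j ^ n)"
proof -
  obtain \<psi> where psi0: "qhom \<psi> (generate G (insert x S))" "\<psi> x = 1" using psi_exists[OF S x inf] by blast
  have "generate G (insert x S) = carrier G"
  proof
    show "generate G (insert x S) \<subseteq> carrier G" using S x by (intro generate_incl) auto
    show "carrier G \<subseteq> generate G (insert x S)" using gen mono_generate[of S "insert x S"] by auto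
  qed
  then have psi: "qhom \<psi> (carrier G)" using psi0 by simp
  obtain d where d: "0 < d" "\<forall>y\<in>carrier G. of_int d * \<psi> y \<in> \<int>" using denom_bound[OF S gen psi] by blast
  have sub: "subgroup (carrier G) G" by (rule subgroup_self)
  have "int i ^ n dvd d * int j ^ n" if t: "t \<in> hom G G" and e: "t (x [^] (i::nat)) = x [^] (j::nat)" for t i j n
  proof -
    define y where "y = (t ^^ n) x"
    have y: "y \<in> carrier G" using funpow_hom[OF t x] by (simp add: y_def)
    have "(t ^^ n) (x [^] (i ^ n)) = y [^] (i ^ n)" using funpow_hom[OF t x] by (simp add: y_def)
    then have "y [^] (i ^ n) = x [^] (j ^ n)" using funpow_chain[OF t x e] by simp
    then have "of_nat (i ^ n) * \<psi> y = of_nat (j ^ n)"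
      using qhom_nat_pow[OF psi sub y, of "i ^ n"] qhom_nat_pow[OF psi sub x, of "j ^ n"] psi0(2) by simp
    moreover obtain z where z: "of_int d * \<psi> y = of_int z" using d(2) y by (metis Ints_cases)
    ultimately have "of_int (int i ^ n * z) = (of_int (d * int j ^ n) :: rat)"
      by (simp add: algebra_simps) (metis mult.assoc mult.commute of_nat_power)
    then have "int i ^ n * z = d * int j ^ n" by (simp only: of_int_eq_iff)
    then show ?thesis by (metis dvd_triv_left)
  qed
  then show ?thesis using d(1) by blast
qed

end

lemma nt_eq:
  fixes i j :: nat and d :: int
  assumes "0 < i" "0 < j" "0 < d" "\<forall>n. int i ^ n dvd d * int j ^ n" "\<forall>n. int j ^ n dvd d * int i ^ n"
  shows "i = j"
proof -
  have one: "a = 1" if a: "0 < (a::nat)" "\<forall>n. int a ^ n dvd d" for a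
  proof (rule ccontr)
    assume "a \<noteq> 1"
    then have "2 \<le> a" using a by simp
    have "int a ^ nat d dvd d" using a by blast
    then have "int a ^ nat d \<le> d" using assms(3) by (simp add: zdvd_imp_le)
    moreover have "(2::int) ^ nat d \<le> int a ^ nat d" using \<open>2 \<le> a\<close> by (intro power_mono) auto
    moreover have "int (nat d) < int (2 ^ nat d)" using less_exp[of "nat d"] by linarith
    moreover have "int (nat d) = d" using assms(3) by simp
    ultimately show False by simp
  qed
  define g where "g = gcd i j"
  have g0: "g \<noteq> 0" using assms(1) by (simp add: g_def)
  obtain a b where ab: "i = a * g" "j = b * g" "coprime a b" using gcd_coprime_exists[OF g0[unfolded g_def]] g_def by blast
  have cop: "coprime (int a ^ n) (int b ^ n)" for n using ab(3) by simp
  have "int a ^ n dvd d" for n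
  proof -
    have "(int a ^ n) * (int g ^ n) dvd (d * int b ^ n) * (int g ^ n)"
      using assms(4) ab by (simp add: power_mult_distrib mult.assoc)
    then have "int a ^ n dvd d * int b ^ n" using g0 by simp
    then show ?thesis using cop by (simp add: coprime_dvd_mult_left_iff)
  qed
  then have "a = 1" using one assms(1) ab(1) by (metis gr0I mult_0)
  have "int b ^ n dvd d" for n
  proof -
    have "(int b ^ n) * (int g ^ n) dvd (d * int a ^ n) * (int g ^ n)"
      using assms(5) ab by (simp add: power_mult_distrib mult.assoc)
    then have "int b ^ n dvd d * int a ^ n" using g0 by simp
    then show ?thesis using cop[THEN coprime_commute[THEN iffD1]] by (simp add: coprime_dvd_mult_left_iff)
  qed
  then have "b = 1" using one assms(2) ab(2) by (metis gr0I mult_0)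
  then show ?thesis using \<open>a = 1\<close> ab by simp
qed


lemma iso_data:
  assumes "f \<in> ring_iso (ring_mat TYPE('a::ring_1) i ()) (ring_mat TYPE('a) j ())"
  shows "(\<forall>A. A \<in> carrier_mat i i \<longrightarrow> f A \<in> carrier_mat j j) \<and>
    (\<forall>A B. A \<in> carrier_mat i i \<longrightarrow> B \<in> carrier_mat i i \<longrightarrow> f (A + B) = f A + f B) \<and>
    (\<forall>A B. A \<in> carrier_mat i i \<longrightarrow> B \<in> carrier_mat i i \<longrightarrow> f (A * B) = f A * f B) \<and>
    f (1\<^sub>m i) = 1\<^sub>m j \<and> bij_betw f (carrier_mat i i) (carrier_mat j j)"
  using assms unfolding ring_iso_def ring_hom_def by (auto simp: ring_mat_simps)

lemma inv_data:
  fixes f :: "'a::ring_1 mat \<Rightarrow> 'a mat"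
  assumes fc: "\<forall>A. A \<in> carrier_mat i i \<longrightarrow> f A \<in> carrier_mat j j"
    and fadd: "\<forall>A B. A \<in> carrier_mat i i \<longrightarrow> B \<in> carrier_mat i i \<longrightarrow> f (A + B) = f A + f B"
    and fmul: "\<forall>A B. A \<in> carrier_mat i i \<longrightarrow> B \<in> carrier_mat i i \<longrightarrow> f (A * B) = f A * f B"
    and f1: "f (1\<^sub>m i) = 1\<^sub>m j" and bij: "bij_betw f (carrier_mat i i) (carrier_mat j j)"
  defines "g \<equiv> inv_into (carrier_mat i i) f"
  shows "(\<forall>A. A \<in> carrier_mat j j \<longrightarrow> g A \<in> carrier_mat i i) \<and>
    (\<forall>A B. A \<in> carrier_mat j j \<longrightarrow> B \<in> carrier_mat j j \<longrightarrow> g (A + B) = g A + g B) \<and>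
    (\<forall>A B. A \<in> carrier_mat j j \<longrightarrow> B \<in> carrier_mat j j \<longrightarrow> g (A * B) = g A * g B) \<and>
    g (1\<^sub>m j) = 1\<^sub>m i"
proof -
  have gc: "\<And>A. A \<in> carrier_mat j j \<Longrightarrow> g A \<in> carrier_mat i i"
    unfolding g_def using bij by (metis bij_betw_def inv_into_into)
  have fg: "\<And>A. A \<in> carrier_mat j j \<Longrightarrow> f (g A) = A"
    unfolding g_def using bij by (simp add: bij_betw_inv_into_right)
  have gf: "\<And>A. A \<in> carrier_mat i i \<Longrightarrow> g (f A) = A"
    unfolding g_def using bij by (simp add: bij_betw_inv_into_left)
  have ga: "g (A + B) = g A + g B" if "A \<in> carrier_mat j j" "B \<in> carrier_mat j j" for A B
  proof -
    have "A + B = f (g A + g B)" using that fadd gc fg by simp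
    then show ?thesis using gf gc that by simp
  qed
  have gm: "g (A * B) = g A * g B" if "A \<in> carrier_mat j j" "B \<in> carrier_mat j j" for A B
  proof -
    have "A * B = f (g A * g B)" using that fmul gc fg by simp
    moreover have "g A * g B \<in> carrier_mat i i" using gc[OF that(1)] gc[OF that(2)] by (rule mult_carrier_mat)
    ultimately show ?thesis using gf by simp
  qed
  have "g (1\<^sub>m j) = 1\<^sub>m i" using gf[of "1\<^sub>m i"] f1 by simp
  then show ?thesis using gc ga gm by blast
qed

lemma tau_eq:
  fixes f :: "'a::ring_1 mat \<Rightarrow> 'a mat"
  assumes i0: "0 < i" and j0: "0 < j"
    and fc: "\<forall>A. A \<in> carrier_mat i i \<longrightarrow> f A \<in> carrier_mat j j"
    and fadd: "\<forall>A B. A \<in> carrier_mat i i \<longrightarrow> B \<in> carrier_mat i i \<longrightarrow> f (A + B) = f A + f B"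
    and fmul: "\<forall>A B. A \<in> carrier_mat i i \<longrightarrow> B \<in> carrier_mat i i \<longrightarrow> f (A * B) = f A * f B"
    and f1: "f (1\<^sub>m i) = 1\<^sub>m j"
  shows "tk (\<lambda>a. f (emb i a)) j \<in> hom (K0 TYPE('a)) (K0 TYPE('a)) \<and>
    tk (\<lambda>a. f (emb i a)) j (K0_unit TYPE('a) [^]\<^bsub>K0 TYPE('a)\<^esub> i) = K0_unit TYPE('a) [^]\<^bsub>K0 TYPE('a)\<^esub> j"
proof -
  let ?h = "\<lambda>a. f (emb i a)"
  have nh: "nuhom ?h j" using nuhom_f[OF i0 j0] fc fadd fmul f1 by blast
  have V: "(\<Sum>_<i. abs_vr (?h 1)) = (\<Sum>_<j. abs_vr (1\<^sub>m 1 :: 'a mat))"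
    using key_vfact[OF i0 j0] fc fadd fmul f1 by blast
  have hom: "tk ?h j \<in> hom (K0 TYPE('a)) (K0 TYPE('a))" by (rule tk_hom[OF nh])
  interpret K: comm_group "K0 TYPE('a)" by (rule comm_group_K0)
  have up: "(1\<^sub>m 1, 0\<^sub>m 0 0) \<in> K0_pairs TYPE('a)" by (simp add: pairs_iff idem_one idem_zero)
  have xc: "K0_unit TYPE('a) \<in> carrier (K0 TYPE('a))" unfolding K0_unit_def using up by (rule kc_carrier)
  have hp: "(?h 1, 0\<^sub>m 0 0) \<in> K0_pairs TYPE('a)"
  proof -
    have "idem_mat (tmat ?h j (1\<^sub>m 1))" by (rule tmat_idem[OF nh idem_one])
    then show ?thesis using tmat_one[OF nh] by (simp add: pairs_iff idem_zero)
  qed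
  have "tk ?h j (K0_unit TYPE('a) [^]\<^bsub>K0 TYPE('a)\<^esub> i) = (tk ?h j (K0_unit TYPE('a))) [^]\<^bsub>K0 TYPE('a)\<^esub> i"
    using hom_nat_pow[OF hom xc K.is_group K.is_group] .
  also have "\<dots> = kc (?h 1, 0\<^sub>m 0 0) [^]\<^bsub>K0 TYPE('a)\<^esub> i" using tk_unit[OF nh] by simp
  finally have L: "tk ?h j (K0_unit TYPE('a) [^]\<^bsub>K0 TYPE('a)\<^esub> i) = kc (?h 1, 0\<^sub>m 0 0) [^]\<^bsub>K0 TYPE('a)\<^esub> i" .
  obtain q1 where q1: "q1 \<in> K0_pairs TYPE('a)" "kc (?h 1, 0\<^sub>m 0 0) [^]\<^bsub>K0 TYPE('a)\<^esub> i = kc q1"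
    "al q1 = ((\<Sum>_<i. abs_vr (?h 1)), (\<Sum>_<i. abs_vr (0\<^sub>m 0 0 :: 'a mat)))"
    using kc_pow[OF hp, of i] by (auto simp: al_def)
  obtain q2 where q2: "q2 \<in> K0_pairs TYPE('a)" "kc (1\<^sub>m 1, 0\<^sub>m 0 0) [^]\<^bsub>K0 TYPE('a)\<^esub> j = kc q2"
    "al q2 = ((\<Sum>_<j. abs_vr (1\<^sub>m 1 :: 'a mat)), (\<Sum>_<j. abs_vr (0\<^sub>m 0 0 :: 'a mat)))"
    using kc_pow[OF up, of j] by (auto simp: al_def)
  have "gr (al q1) (al q2)" using q1(3) q2(3) V by (simp add: gr_def vr_zero)
  then have "kc q1 = kc q2" using q1(1) q2(1) by (simp add: kc_eq)
  then show ?thesis using hom L q1(2) q2(2) by (simp add: K0_unit_def)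
qed

theorem mainTheorem3:
  assumes "\<exists>S. finite S \<and> S \<subseteq> carrier (K0 TYPE('a::ring_1)) \<and>
              generate (K0 TYPE('a)) S = carrier (K0 TYPE('a))"
      and "\<forall>n::nat. 0 < n \<longrightarrow> K0_unit TYPE('a) [^]\<^bsub>K0 TYPE('a)\<^esub> n \<noteq> \<one>\<^bsub>K0 TYPE('a)\<^esub>"
  shows "invariant_matrix_number TYPE('a)"
  unfolding invariant_matrix_number_def
proof (intro allI impI notI)
  fix i j :: nat
  assume i0: "0 < i" and j0: "0 < j" and ij: "i \<noteq> j"
    and iso: "is_ring_iso (ring_mat TYPE('a) i ()) (ring_mat TYPE('a) j ())"
  obtain f where f: "f \<in> ring_iso (ring_mat TYPE('a) i ()) (ring_mat TYPE('a) j ())"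
    using iso unfolding is_ring_iso_def by blast
  note fd = iso_data[OF f]
  define g where "g = inv_into (carrier_mat i i) f"
  have gd: "(\<forall>A. A \<in> carrier_mat j j \<longrightarrow> g A \<in> carrier_mat i i) \<and>
    (\<forall>A B. A \<in> carrier_mat j j \<longrightarrow> B \<in> carrier_mat j j \<longrightarrow> g (A + B) = g A + g B) \<and>
    (\<forall>A B. A \<in> carrier_mat j j \<longrightarrow> B \<in> carrier_mat j j \<longrightarrow> g (A * B) = g A * g B) \<and>
    g (1\<^sub>m j) = 1\<^sub>m i"
    unfolding g_def using fd by (intro inv_data) auto
  have t1: "tk (\<lambda>a. f (emb i a)) j \<in> hom (K0 TYPE('a)) (K0 TYPE('a)) \<and>
    tk (\<lambda>a. f (emb i a)) j (K0_unit TYPE('a) [^]\<^bsub>K0 TYPE('a)\<^esub> i) = K0_unit TYPE('a) [^]\<^bsub>K0 TYPE('a)\<^esub> j"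
    using fd by (intro tau_eq[OF i0 j0]) auto
  have t2: "tk (\<lambda>a. g (emb j a)) i \<in> hom (K0 TYPE('a)) (K0 TYPE('a)) \<and>
    tk (\<lambda>a. g (emb j a)) i (K0_unit TYPE('a) [^]\<^bsub>K0 TYPE('a)\<^esub> j) = K0_unit TYPE('a) [^]\<^bsub>K0 TYPE('a)\<^esub> i"
    using gd by (intro tau_eq[OF j0 i0]) auto
  obtain S where S: "finite S" "S \<subseteq> carrier (K0 TYPE('a))" "generate (K0 TYPE('a)) S = carrier (K0 TYPE('a))"
    using assms(1) by blast
  have up: "(1\<^sub>m 1, 0\<^sub>m 0 0) \<in> K0_pairs TYPE('a)" by (simp add: pairs_iff idem_one idem_zero)
  have xc: "K0_unit TYPE('a) \<in> carrier (K0 TYPE('a))" unfolding K0_unit_def using up by (rule kc_carrier)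
  obtain d where d: "0 < d" "\<forall>t i j n. t \<in> hom (K0 TYPE('a)) (K0 TYPE('a)) \<longrightarrow>
      t (K0_unit TYPE('a) [^]\<^bsub>K0 TYPE('a)\<^esub> (i::nat)) = K0_unit TYPE('a) [^]\<^bsub>K0 TYPE('a)\<^esub> (j::nat) \<longrightarrow>
      int i ^ n dvd d * int j ^ n"
    using comm_group.grp_dvd[OF comm_group_K0 S xc assms(2)] by blast
  have "\<forall>n. int i ^ n dvd d * int j ^ n" using d(2) t1 by blast
  moreover have "\<forall>n. int j ^ n dvd d * int i ^ n" using d(2) t2 by blast
  ultimately have "i = j" using nt_eq[OF i0 j0 d(1)] by blast
  then show False using ij by simp
qed


end
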